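(* Let $W$ be a neat, upward-restricted layered wheel. Then there is a constant $c$ (depending on $W$) such that every $n$-vertex induced subgraph of $W$ with $n\ge 2$ has treewidth at most $c\log n$; that is, the $n$-vertex induced subgraphs of $W$ have treewidth $O(\log n)$.
   Context: A layered wheel is a countably infinite graph $W$ on the same vertex set as a countably infinite, locally finite rooted tree $T$ embedded in the plane, such that: (1) for every natural number $n$, the set $L_n$ of nodes at distance $n$ from the root of $T$ induces in $W$ a finite path visiting the nodes of $L_n$ in the left-to-right order of the planar embedding of $T$; the edges with both endpoints in a common layer $L_n$ are the layer edges, forming the set $E_L$; (2) every edge of $W$ not in $E_L$ joins a pair of nodes in ancestor–descendant relation in $T$; (3) there is a finite bound on the length of paths in $T$ consisting only of nodes of degree $2$ in $T$. A node is its own ancestor and descendant. $W$ is neat if $T$ has no leaf. $W$ is upward-restricted if there is an integer $t$ such that for every node $v$ of $T$ there is a set $X_v$ of at most $t$ ancestors of $v$ such that in $W-E_L$ every edge with exactly one endpoint among the descendants of $v$ has its other endpoint in $X_v$. *)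

theory Defs
  imports Complex_Main "HOL-Library.Countable_Set"
begin

text \<open>The planar embedding is given by a left-to-right order slt on the children of each node.\<close>

definition rooted_tree :: "'a set \<Rightarrow> 'a \<Rightarrow> ('a \<Rightarrow> 'a) \<Rightarrow> bool" where
  "rooted_tree V r par \<longleftrightarrow> r \<in> V \<and> (\<forall>v\<in>V. v \<noteq> r \<longrightarrow> par v \<in> V)
     \<and> (\<forall>v\<in>V. \<exists>k. (par ^^ k) v = r)"

definition depth :: "'a \<Rightarrow> ('a \<Rightarrow> 'a) \<Rightarrow> 'a \<Rightarrow> nat" where
  "depth r par v = (LEAST k. (par ^^ k) v = r)"

definition layer :: "'a set \<Rightarrow> 'a \<Rightarrow> ('a \<Rightarrow> 'a) \<Rightarrow> nat \<Rightarrow> 'a set" where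
  "layer V r par n = {v \<in> V. depth r par v = n}"

definition children :: "'a set \<Rightarrow> 'a \<Rightarrow> ('a \<Rightarrow> 'a) \<Rightarrow> 'a \<Rightarrow> 'a set" where
  "children V r par v = {w \<in> V. w \<noteq> r \<and> par w = v}"

text \<open>u is an ancestor of v (every node is its own ancestor).\<close>
definition ancestor :: "'a set \<Rightarrow> 'a \<Rightarrow> ('a \<Rightarrow> 'a) \<Rightarrow> 'a \<Rightarrow> 'a \<Rightarrow> bool" where
  "ancestor V r par u v \<longleftrightarrow> u \<in> V \<and> v \<in> V \<and> (\<exists>k \<le> depth r par v. (par ^^ k) v = u)"

definition tadj :: "'a set \<Rightarrow> 'a \<Rightarrow> ('a \<Rightarrow> 'a) \<Rightarrow> 'a \<Rightarrow> 'a \<Rightarrow> bool" where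
  "tadj V r par u v \<longleftrightarrow> u \<in> V \<and> v \<in> V \<and> ((u \<noteq> r \<and> par u = v) \<or> (v \<noteq> r \<and> par v = u))"

definition tdegree :: "'a set \<Rightarrow> 'a \<Rightarrow> ('a \<Rightarrow> 'a) \<Rightarrow> 'a \<Rightarrow> nat" where
  "tdegree V r par v = card (children V r par v) + (if v = r then 0 else 1)"

definition tpath :: "'a set \<Rightarrow> 'a \<Rightarrow> ('a \<Rightarrow> 'a) \<Rightarrow> 'a list \<Rightarrow> bool" where
  "tpath V r par xs \<longleftrightarrow> xs \<noteq> [] \<and> distinct xs \<and> set xs \<subseteq> V \<and>
     (\<forall>i. Suc i < length xs \<longrightarrow> tadj V r par (xs ! i) (xs ! Suc i))"

definition planar_embedding :: "'a set \<Rightarrow> 'a \<Rightarrow> ('a \<Rightarrow> 'a) \<Rightarrow> ('a \<Rightarrow> 'a \<Rightarrow> bool) \<Rightarrow> bool" where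
  "planar_embedding V r par slt \<longleftrightarrow> (\<forall>v\<in>V. strict_linear_order_on (children V r par v)
      {(a, b). a \<in> children V r par v \<and> b \<in> children V r par v \<and> slt a b})"

text \<open>Left-to-right order of two nodes of a common layer induced by the embedding:
  compare the (sibling) ancestors at the point where the root paths diverge.\<close>
definition left_of :: "'a \<Rightarrow> ('a \<Rightarrow> 'a) \<Rightarrow> ('a \<Rightarrow> 'a \<Rightarrow> bool) \<Rightarrow> 'a \<Rightarrow> 'a \<Rightarrow> bool" where
  "left_of r par slt u v \<longleftrightarrow> depth r par u = depth r par v \<and>
     (\<exists>k < depth r par u. (par ^^ k) u \<noteq> (par ^^ k) v \<and>
        par ((par ^^ k) u) = par ((par ^^ k) v) \<and> slt ((par ^^ k) u) ((par ^^ k) v))"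

definition layered_wheel :: "'a set \<Rightarrow> 'a \<Rightarrow> ('a \<Rightarrow> 'a) \<Rightarrow> ('a \<Rightarrow> 'a \<Rightarrow> bool)
    \<Rightarrow> ('a \<Rightarrow> 'a \<Rightarrow> bool) \<Rightarrow> bool" where
  "layered_wheel V r par slt E \<longleftrightarrow>
     rooted_tree V r par \<and> infinite V \<and> countable V
     \<and> (\<forall>v\<in>V. finite (children V r par v))
     \<and> planar_embedding V r par slt
     \<and> (\<forall>u v. E u v \<longrightarrow> u \<in> V \<and> v \<in> V \<and> u \<noteq> v \<and> E v u)
     \<comment> \<open>(1) each layer induces the path following the left-to-right order\<close>
     \<and> (\<forall>n. \<forall>u\<in>layer V r par n. \<forall>v\<in>layer V r par n. u \<noteq> v \<longrightarrow>
          (E u v \<longleftrightarrow>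
            ((left_of r par slt u v \<and> \<not> (\<exists>w\<in>layer V r par n. left_of r par slt u w \<and> left_of r par slt w v))
           \<or> (left_of r par slt v u \<and> \<not> (\<exists>w\<in>layer V r par n. left_of r par slt v w \<and> left_of r par slt w u)))))
     \<comment> \<open>(2) non-layer edges join ancestor-descendant pairs\<close>
     \<and> (\<forall>u v. E u v \<and> depth r par u \<noteq> depth r par v \<longrightarrow>
          ancestor V r par u v \<or> ancestor V r par v u)
     \<comment> \<open>(3) bounded length of paths of degree-2 nodes of T\<close>
     \<and> (\<exists>B::nat. \<forall>xs. tpath V r par xs \<and> (\<forall>x\<in>set xs. tdegree V r par x = 2) \<longrightarrow> length xs \<le> B)"

definition neat :: "'a set \<Rightarrow> 'a \<Rightarrow> ('a \<Rightarrow> 'a) \<Rightarrow> bool" where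
  "neat V r par \<longleftrightarrow> (\<forall>v\<in>V. children V r par v \<noteq> {})"

definition upward_restricted :: "'a set \<Rightarrow> 'a \<Rightarrow> ('a \<Rightarrow> 'a) \<Rightarrow> ('a \<Rightarrow> 'a \<Rightarrow> bool) \<Rightarrow> bool" where
  "upward_restricted V r par E \<longleftrightarrow> (\<exists>t::nat. \<forall>v\<in>V. \<exists>X. finite X \<and> card X \<le> t
      \<and> (\<forall>x\<in>X. ancestor V r par x v)
      \<and> (\<forall>x y. E x y \<and> depth r par x \<noteq> depth r par y
             \<and> ancestor V r par v x \<and> \<not> ancestor V r par v y \<longrightarrow> y \<in> X))"

definition connected_in :: "'n set \<Rightarrow> ('n \<Rightarrow> 'n \<Rightarrow> bool) \<Rightarrow> bool" where
  "connected_in S R \<longleftrightarrow> (\<forall>i\<in>S. \<forall>j\<in>S. (\<lambda>a b. R a b \<and> a \<in> S \<and> b \<in> S)\<^sup>*\<^sup>* i j)"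

definition has_cycle :: "'n set \<Rightarrow> ('n \<Rightarrow> 'n \<Rightarrow> bool) \<Rightarrow> bool" where
  "has_cycle N R \<longleftrightarrow> (\<exists>cs. length cs \<ge> 3 \<and> distinct cs \<and> set cs \<subseteq> N
      \<and> (\<forall>i. Suc i < length cs \<longrightarrow> R (cs ! i) (cs ! Suc i)) \<and> R (last cs) (hd cs))"

definition finite_tree :: "'n set \<Rightarrow> ('n \<Rightarrow> 'n \<Rightarrow> bool) \<Rightarrow> bool" where
  "finite_tree N R \<longleftrightarrow> finite N \<and> N \<noteq> {} \<and> (\<forall>i j. R i j \<longrightarrow> i \<in> N \<and> j \<in> N \<and> i \<noteq> j \<and> R j i)
     \<and> connected_in N R \<and> \<not> has_cycle N R"

definition tree_decomposition :: "'a set \<Rightarrow> ('a \<Rightarrow> 'a \<Rightarrow> bool)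
    \<Rightarrow> nat set \<Rightarrow> (nat \<Rightarrow> nat \<Rightarrow> bool) \<Rightarrow> (nat \<Rightarrow> 'a set) \<Rightarrow> bool" where
  "tree_decomposition S E N R B \<longleftrightarrow> finite_tree N R
     \<and> (\<forall>i\<in>N. B i \<subseteq> S)
     \<and> (\<forall>x\<in>S. \<exists>i\<in>N. x \<in> B i)
     \<and> (\<forall>x\<in>S. \<forall>y\<in>S. E x y \<longrightarrow> (\<exists>i\<in>N. x \<in> B i \<and> y \<in> B i))
     \<and> (\<forall>x\<in>S. connected_in {i \<in> N. x \<in> B i} R)"

definition treewidth_at_most :: "'a set \<Rightarrow> ('a \<Rightarrow> 'a \<Rightarrow> bool) \<Rightarrow> real \<Rightarrow> bool" where
  "treewidth_at_most S E w \<longleftrightarrow> (\<exists>N R B. tree_decomposition S E N R B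
      \<and> (\<forall>i\<in>N. real (card (B i)) - 1 \<le> w))"

end

theory Submission
  imports Defs "HOL-Library.Countable"
begin

definition ttop :: "nat list set \<Rightarrow> (nat list \<Rightarrow> 'a set) \<Rightarrow> 'a \<Rightarrow> nat list \<Rightarrow> bool" where
  "ttop N B x i \<longleftrightarrow> i \<in> N \<and> x \<in> B i \<and> (i = [] \<or> x \<notin> B (butlast i))"

definition rtd :: "('a \<Rightarrow> 'a \<Rightarrow> bool) \<Rightarrow> 'a set \<Rightarrow> nat list set \<Rightarrow> (nat list \<Rightarrow> 'a set) \<Rightarrow> bool" where
  "rtd E A N B \<longleftrightarrow> finite N \<and> [] \<in> N \<and> (\<forall>xs\<in>N. butlast xs \<in> N) \<and> (\<forall>i\<in>N. B i \<subseteq> A)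
     \<and> (\<forall>x\<in>A. \<exists>i\<in>N. x \<in> B i) \<and> (\<forall>x\<in>A. \<forall>y\<in>A. E x y \<longrightarrow> (\<exists>i\<in>N. x \<in> B i \<and> y \<in> B i))
     \<and> (\<forall>x i j. ttop N B x i \<and> ttop N B x j \<longrightarrow> i = j)"

lemma rtd_single: "rtd E A {[]} (\<lambda>_. A)"
  unfolding rtd_def ttop_def by auto

definition gB :: "'a set \<Rightarrow> (nat list \<Rightarrow> 'a set) \<Rightarrow> (nat list \<Rightarrow> 'a set) \<Rightarrow> nat list \<Rightarrow> 'a set" where
  "gB \<beta> B1 B2 xs = (case xs of [] \<Rightarrow> \<beta> | c # ys \<Rightarrow> if c = 0 then B1 ys else B2 ys)"

lemma butlast_Cons': "butlast (c # ys) = (if ys = [] then [] else c # butlast ys)"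
  by simp

lemma glue:
  assumes r1: "rtd E A1 N1 B1" and r2: "rtd E A2 N2 B2"
    and i1: "A1 \<inter> \<beta> \<subseteq> B1 []" and i2: "A2 \<inter> \<beta> \<subseteq> B2 []"
    and i12: "A1 \<inter> A2 \<subseteq> \<beta>"
    and ed: "\<forall>x\<in>\<beta> \<union> A1 \<union> A2. \<forall>y\<in>\<beta> \<union> A1 \<union> A2. E x y \<longrightarrow>
              (x\<in>\<beta> \<and> y\<in>\<beta>) \<or> (x\<in>A1 \<and> y\<in>A1) \<or> (x\<in>A2 \<and> y\<in>A2)"
  shows "rtd E (\<beta> \<union> A1 \<union> A2) ({[]} \<union> Cons 0 ` N1 \<union> Cons 1 ` N2) (gB \<beta> B1 B2)"
proof -
  let ?N = "{[]} \<union> Cons 0 ` N1 \<union> Cons 1 ` N2"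
  let ?B = "gB \<beta> B1 B2"
  have f1: "finite N1" "[] \<in> N1" "\<forall>xs\<in>N1. butlast xs \<in> N1" "\<forall>i\<in>N1. B1 i \<subseteq> A1"
     "\<forall>x\<in>A1. \<exists>i\<in>N1. x \<in> B1 i" "\<forall>x\<in>A1. \<forall>y\<in>A1. E x y \<longrightarrow> (\<exists>i\<in>N1. x \<in> B1 i \<and> y \<in> B1 i)"
     "\<And>x i j. ttop N1 B1 x i \<Longrightarrow> ttop N1 B1 x j \<Longrightarrow> i = j"
    using r1 unfolding rtd_def by blast+
  have f2: "finite N2" "[] \<in> N2" "\<forall>xs\<in>N2. butlast xs \<in> N2" "\<forall>i\<in>N2. B2 i \<subseteq> A2"
     "\<forall>x\<in>A2. \<exists>i\<in>N2. x \<in> B2 i" "\<forall>x\<in>A2. \<forall>y\<in>A2. E x y \<longrightarrow> (\<exists>i\<in>N2. x \<in> B2 i \<and> y \<in> B2 i)"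
     "\<And>x i j. ttop N2 B2 x i \<Longrightarrow> ttop N2 B2 x j \<Longrightarrow> i = j"
    using r2 unfolding rtd_def by blast+
  have B0: "?B [] = \<beta>" "\<And>ys. ?B (0#ys) = B1 ys" "\<And>ys. ?B (Suc 0#ys) = B2 ys"
    by (auto simp: gB_def)
  have top0: "ttop ?N ?B x (0#ys) \<longleftrightarrow> ttop N1 B1 x ys \<and> (ys = [] \<longrightarrow> x \<notin> \<beta>)" for x ys
    using f1(2) by (auto simp: ttop_def B0 butlast_Cons' split: if_splits)
  have top1: "ttop ?N ?B x (Suc 0#ys) \<longleftrightarrow> ttop N2 B2 x ys \<and> (ys = [] \<longrightarrow> x \<notin> \<beta>)" for x ys
    using f2(2) by (auto simp: ttop_def B0 butlast_Cons' split: if_splits)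
  have topE: "ttop ?N ?B x i \<Longrightarrow> i = [] \<or> (\<exists>ys. i = 0#ys) \<or> (\<exists>ys. i = Suc 0 # ys)" for x i
    by (auto simp: ttop_def)
  have topN: "ttop ?N ?B x [] \<longleftrightarrow> x \<in> \<beta>" for x by (auto simp: ttop_def B0)
  have t1B: "ttop N1 B1 x ys \<Longrightarrow> x \<in> A1" for x ys using f1(4) by (auto simp: ttop_def)
  have t2B: "ttop N2 B2 x ys \<Longrightarrow> x \<in> A2" for x ys using f2(4) by (auto simp: ttop_def)
  have t1r: "x \<in> A1 \<Longrightarrow> x \<in> \<beta> \<Longrightarrow> ttop N1 B1 x []" for x using i1 f1(2) by (auto simp: ttop_def)
  have t2r: "x \<in> A2 \<Longrightarrow> x \<in> \<beta> \<Longrightarrow> ttop N2 B2 x []" for x using i2 f2(2) by (auto simp: ttop_def)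
  have uniq: "i = j" if a: "ttop ?N ?B x i" and b: "ttop ?N ?B x j" for x i j
  proof -
    have "\<And>i j. ttop ?N ?B x i \<Longrightarrow> ttop ?N ?B x j \<Longrightarrow> i = [] \<Longrightarrow> i = j"
    proof -
      fix i j assume a: "ttop ?N ?B x i" and b: "ttop ?N ?B x j" and "i = []"
      then have xb: "x \<in> \<beta>" using topN by simp
      show "i = j"
        using topE[OF b] proof (elim disjE exE)
        fix ys assume "j = 0 # ys"
        then have "ttop N1 B1 x ys" "ys = [] \<longrightarrow> x \<notin> \<beta>" using b top0 by auto
        then show ?thesis using t1B t1r xb f1(7) by blast
      next
        fix ys assume "j = Suc 0 # ys"
        then have "ttop N2 B2 x ys" "ys = [] \<longrightarrow> x \<notin> \<beta>" using b top1 by auto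
        then show ?thesis using t2B t2r xb f2(7) by blast
      qed (use \<open>i = []\<close> in simp)
    qed
    note base = this
    show ?thesis
      using topE[OF a] topE[OF b] proof (elim disjE exE)
      fix ys zs assume "i = 0 # ys" "j = 0 # zs" then show ?thesis using a b top0 f1(7) by auto
    next
      fix ys zs assume "i = Suc 0 # ys" "j = Suc 0 # zs" then show ?thesis using a b top1 f2(7) by auto
    next
      fix ys zs assume ij: "i = 0 # ys" "j = Suc 0 # zs"
      then have "ttop N1 B1 x ys" "ys = [] \<longrightarrow> x \<notin> \<beta>" "ttop N2 B2 x zs" using a b top0 top1 by auto
      then have "x \<in> \<beta>" using t1B t2B i12 by blast
      then show ?thesis using \<open>ttop N1 B1 x ys\<close> \<open>ys = [] \<longrightarrow> x \<notin> \<beta>\<close> t1B t1r f1(7) by blast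
    next
      fix ys zs assume ij: "i = Suc 0 # ys" "j = 0 # zs"
      then have "ttop N2 B2 x ys" "ys = [] \<longrightarrow> x \<notin> \<beta>" "ttop N1 B1 x zs" using a b top0 top1 by auto
      then have "x \<in> \<beta>" using t1B t2B i12 by blast
      then show ?thesis using \<open>ttop N2 B2 x ys\<close> \<open>ys = [] \<longrightarrow> x \<notin> \<beta>\<close> t2B t2r f2(7) by blast
    qed (use base a b in \<open>auto simp: eq_commute\<close>)
  qed
  show ?thesis
    unfolding rtd_def
  proof (intro conjI)
    show "finite ?N" using f1(1) f2(1) by simp
    show "[] \<in> ?N" by simp
    show "\<forall>xs\<in>?N. butlast xs \<in> ?N"
      using f1(3) f2(3) by (auto simp: butlast_Cons')
    show "\<forall>i\<in>?N. ?B i \<subseteq> \<beta> \<union> A1 \<union> A2"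
      using f1(4) f2(4) by (auto simp: B0; blast)
    show "\<forall>x\<in>\<beta> \<union> A1 \<union> A2. \<exists>i\<in>?N. x \<in> ?B i"
    proof
      fix x assume "x \<in> \<beta> \<union> A1 \<union> A2"
      then consider "x \<in> \<beta>" | "x \<in> A1" | "x \<in> A2" by blast
      then show "\<exists>i\<in>?N. x \<in> ?B i"
      proof cases
        case 1 then show ?thesis by (intro bexI[of _ "[]"]) (auto simp: B0)
      next
        case 2 then obtain i where "i \<in> N1" "x \<in> B1 i" using f1(5) by blast
        then show ?thesis by (intro bexI[of _ "0#i"]) (auto simp: B0)
      next
        case 3 then obtain i where "i \<in> N2" "x \<in> B2 i" using f2(5) by blast
        then show ?thesis by (intro bexI[of _ "Suc 0#i"]) (auto simp: B0)
      qed
    qed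
    show "\<forall>x\<in>\<beta> \<union> A1 \<union> A2. \<forall>y\<in>\<beta> \<union> A1 \<union> A2. E x y \<longrightarrow> (\<exists>i\<in>?N. x \<in> ?B i \<and> y \<in> ?B i)"
    proof (intro ballI impI)
      fix x y assume xy: "x \<in> \<beta> \<union> A1 \<union> A2" "y \<in> \<beta> \<union> A1 \<union> A2" "E x y"
      then consider "x\<in>\<beta> \<and> y\<in>\<beta>" | "x\<in>A1 \<and> y\<in>A1" | "x\<in>A2 \<and> y\<in>A2" using ed by blast
      then show "\<exists>i\<in>?N. x \<in> ?B i \<and> y \<in> ?B i"
      proof cases
        case 1 then show ?thesis by (intro bexI[of _ "[]"]) (auto simp: B0)
      next
        case 2 then obtain i where "i \<in> N1" "x \<in> B1 i" "y \<in> B1 i" using f1(6) xy(3) by blast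
        then show ?thesis by (intro bexI[of _ "0#i"]) (auto simp: B0)
      next
        case 3 then obtain i where "i \<in> N2" "x \<in> B2 i" "y \<in> B2 i" using f2(6) xy(3) by blast
        then show ?thesis by (intro bexI[of _ "Suc 0#i"]) (auto simp: B0)
      qed
    qed
    show "\<forall>x i j. ttop ?N ?B x i \<and> ttop ?N ?B x j \<longrightarrow> i = j" using uniq by blast
  qed
qed

definition cR :: "nat list set \<Rightarrow> nat \<Rightarrow> nat \<Rightarrow> bool" where
  "cR N i j \<longleftrightarrow> i \<in> to_nat ` N \<and> j \<in> to_nat ` N \<and>
     ((from_nat i \<noteq> ([]::nat list) \<and> butlast (from_nat i) = (from_nat j::nat list)) \<or>
      (from_nat j \<noteq> ([]::nat list) \<and> butlast (from_nat j) = (from_nat i::nat list)))"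

lemma fn_tn: "i \<in> to_nat ` (N::nat list set) \<Longrightarrow> to_nat (from_nat i :: nat list) = i"
  by auto

lemma cR_edge:
  assumes "xs \<in> N" "xs \<noteq> []" "butlast xs \<in> N"
  shows "cR N (to_nat xs) (to_nat (butlast xs))" "cR N (to_nat (butlast xs)) (to_nat xs)"
  using assms unfolding cR_def by auto

lemma tree_conn:
  assumes "finite N" "[] \<in> N" "\<forall>xs\<in>N. butlast xs \<in> N"
  shows "connected_in (to_nat ` N) (cR N)"
proof -
  let ?Q = "\<lambda>a b. cR N a b \<and> a \<in> to_nat ` N \<and> b \<in> to_nat ` N"
  have up: "?Q\<^sup>*\<^sup>* (to_nat xs) (to_nat ([]::nat list)) \<and> ?Q\<^sup>*\<^sup>* (to_nat ([]::nat list)) (to_nat xs)"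
    if "xs \<in> N" for xs
    using that
  proof (induction "length xs" arbitrary: xs)
    case 0 then show ?case by simp
  next
    case (Suc n)
    then have ne: "xs \<noteq> []" by auto
    have bn: "butlast xs \<in> N" using assms(3) Suc.prems by blast
    have "length (butlast xs) = n" using Suc.hyps(2) by simp
    then have IH: "?Q\<^sup>*\<^sup>* (to_nat (butlast xs)) (to_nat ([]::nat list)) \<and> ?Q\<^sup>*\<^sup>* (to_nat ([]::nat list)) (to_nat (butlast xs))"
      using Suc.hyps(1) bn by blast
    have e1: "?Q (to_nat xs) (to_nat (butlast xs))" and e2: "?Q (to_nat (butlast xs)) (to_nat xs)"
      using cR_edge[OF Suc.prems ne bn] Suc.prems bn by auto
    have "?Q\<^sup>*\<^sup>* (to_nat xs) (to_nat (butlast xs))" "?Q\<^sup>*\<^sup>* (to_nat (butlast xs)) (to_nat xs)"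
      using e1 e2 by (auto intro: r_into_rtranclp)
    then show ?case using IH by (meson rtranclp_trans)
  qed
  show ?thesis unfolding connected_in_def
  proof (intro ballI)
    fix i j assume "i \<in> to_nat ` N" "j \<in> to_nat ` N"
    then obtain a b where "a \<in> N" "b \<in> N" "i = to_nat a" "j = to_nat b" by auto
    then show "?Q\<^sup>*\<^sup>* i j" using up[of a] up[of b] by (meson rtranclp_trans)
  qed
qed

lemma tree_acyc:
  assumes "\<forall>xs\<in>N. butlast xs \<in> N"
  shows "\<not> has_cycle (to_nat ` N) (cR N)"
proof
  assume "has_cycle (to_nat ` N) (cR N)"
  then obtain cs where cs: "length cs \<ge> 3" "distinct cs" "set cs \<subseteq> to_nat ` N"
      "\<forall>i. Suc i < length cs \<longrightarrow> cR N (cs ! i) (cs ! Suc i)" "cR N (last cs) (hd cs)"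
    unfolding has_cycle_def by blast
  define L where "L = length cs"
  have L3: "L \<ge> 3" using cs(1) L_def by simp
  have adj: "cR N (cs ! k) (cs ! ((k+1) mod L))" if "k < L" for k
  proof (cases "Suc k < L")
    case True then show ?thesis using cs(4) L_def by simp
  next
    case False
    then have "k = L - 1" using that by simp
    moreover have "(L - 1 + 1) mod L = 0" using L3 by simp
    moreover have "cs \<noteq> []" using L3 L_def by auto
    moreover have "last cs = cs ! (L - 1)" "hd cs = cs ! 0" using L_def \<open>cs \<noteq> []\<close>
      by (auto simp: last_conv_nth hd_conv_nth)
    ultimately show ?thesis using cs(5) by simp
  qed
  have sym: "cR N a b \<Longrightarrow> cR N b a" for a b unfolding cR_def by auto
  define f where "f = (\<lambda>i. length (from_nat i :: nat list))"
  obtain m where m: "m < L" "\<forall>k<L. f (cs ! k) \<le> f (cs ! m)"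
  proof -
    have fin: "finite (f ` set cs)" "f ` set cs \<noteq> {}" using L3 L_def by auto
    have "Max (f ` set cs) \<in> f ` set cs" using fin by (rule Max_in)
    then obtain v where v: "v \<in> set cs" "f v = Max (f ` set cs)" by auto
    have "\<forall>w\<in>set cs. f w \<le> f v" using v(2) fin(1) by simp
    note v = v(1) this
    then obtain m where "m < L" "cs ! m = v" using L_def by (metis in_set_conv_nth)
    then show ?thesis using that v(2) L_def by (metis nth_mem)
  qed
  define a where "a = (m+1) mod L"
  define b where "b = (m + L - 1) mod L"
  have aL: "a < L" "b < L" using L3 a_def b_def by auto
  have ae: "a = (if m + 1 = L then 0 else m + 1)" unfolding a_def using m(1) by auto
  have be: "b = (if m = 0 then L - 1 else m - 1)"
  proof (cases "m = 0")
    case True then show ?thesis unfolding b_def using L3 by simp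
  next
    case False
    then have "m + L - 1 = (m - 1) + L" by simp
    then have "b = (m - 1) mod L" unfolding b_def by simp
    then show ?thesis using False m(1) by simp
  qed
  have ab: "a \<noteq> b" using ae be L3 m(1) by (auto split: if_splits)
  have ba: "(b + 1) mod L = m"
  proof -
    have "(b + 1) mod L = (m + L - 1 + 1) mod L" unfolding b_def by (metis mod_add_left_eq)
    also have "m + L - 1 + 1 = m + L" using L3 by simp
    finally show ?thesis using m(1) by simp
  qed
  have e1: "cR N (cs ! m) (cs ! a)" using adj[OF m(1)] a_def by simp
  have e2: "cR N (cs ! m) (cs ! b)" using adj[OF aL(2)] ba sym by simp
  have par: "from_nat (cs ! c) = butlast (from_nat (cs ! m) :: nat list)"
    if "cR N (cs ! m) (cs ! c)" "c < L" for c
  proof -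
    have "f (cs ! c) \<le> f (cs ! m)" using m(2) that(2) by blast
    moreover have "(from_nat (cs ! m) \<noteq> ([]::nat list) \<and> butlast (from_nat (cs ! m)) = (from_nat (cs ! c)::nat list)) \<or>
      (from_nat (cs ! c) \<noteq> ([]::nat list) \<and> butlast (from_nat (cs ! c)) = (from_nat (cs ! m)::nat list))"
      using that(1) unfolding cR_def by blast
    moreover have "from_nat (cs ! c) \<noteq> ([]::nat list) \<Longrightarrow> length (butlast (from_nat (cs ! c)::nat list)) < f (cs ! c)"
      unfolding f_def by simp
    ultimately show ?thesis unfolding f_def
    proof (elim disjE conjE)
      assume "from_nat (cs ! c) \<noteq> ([]::nat list)" "butlast (from_nat (cs ! c)) = (from_nat (cs ! m)::nat list)"
        "length (from_nat (cs ! c)::nat list) \<le> length (from_nat (cs ! m)::nat list)"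
        "from_nat (cs ! c) \<noteq> ([]::nat list) \<Longrightarrow> length (butlast (from_nat (cs ! c)::nat list)) < length (from_nat (cs ! c)::nat list)"
      then show ?thesis by simp
    qed simp
  qed
  have "from_nat (cs ! a) = (from_nat (cs ! b) :: nat list)"
    using par[OF e1 aL(1)] par[OF e2 aL(2)] by simp
  moreover have "cs ! a \<in> to_nat ` N" "cs ! b \<in> to_nat ` N" using cs(3) aL L_def by auto
  ultimately have "cs ! a = cs ! b" using fn_tn by metis
  then show False using cs(2) aL ab L_def by (simp add: nth_eq_iff_index_eq)
qed

lemma rtd_td:
  assumes "rtd E A N B"
  shows "tree_decomposition A E (to_nat ` N) (cR N) (\<lambda>i. B (from_nat i))"
proof -
  have f: "finite N" "[] \<in> N" "\<forall>xs\<in>N. butlast xs \<in> N" "\<forall>i\<in>N. B i \<subseteq> A"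
     "\<forall>x\<in>A. \<exists>i\<in>N. x \<in> B i" "\<forall>x\<in>A. \<forall>y\<in>A. E x y \<longrightarrow> (\<exists>i\<in>N. x \<in> B i \<and> y \<in> B i)"
     "\<And>x i j. ttop N B x i \<Longrightarrow> ttop N B x j \<Longrightarrow> i = j"
    using assms unfolding rtd_def by blast+
  have ft: "finite_tree (to_nat ` N) (cR N)"
    unfolding finite_tree_def
  proof (intro conjI)
    show "finite (to_nat ` N)" using f(1) by simp
    show "to_nat ` N \<noteq> {}" using f(2) by auto
    show "\<forall>i j. cR N i j \<longrightarrow> i \<in> to_nat ` N \<and> j \<in> to_nat ` N \<and> i \<noteq> j \<and> cR N j i"
    proof (intro allI impI conjI)
      fix i j assume c: "cR N i j"
      then show "i \<in> to_nat ` N" "j \<in> to_nat ` N" "cR N j i" unfolding cR_def by auto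
      show "i \<noteq> j"
      proof
        assume "i = j"
        have bl: "\<And>xs::nat list. xs \<noteq> [] \<Longrightarrow> butlast xs \<noteq> xs"
        proof
          fix xs :: "nat list" assume "xs \<noteq> []" "butlast xs = xs"
          then have "length (butlast xs) = length xs" by simp
          moreover have "length xs > 0" using \<open>xs \<noteq> []\<close> by simp
          ultimately show False by (simp only: length_butlast)
        qed
        show False using c \<open>i = j\<close> bl unfolding cR_def by auto
      qed
    qed
    show "connected_in (to_nat ` N) (cR N)" using tree_conn f(1-3) by blast
    show "\<not> has_cycle (to_nat ` N) (cR N)" using tree_acyc f(3) by blast
  qed
  have conn: "connected_in {i \<in> to_nat ` N. x \<in> B (from_nat i)} (cR N)" if "x \<in> A" for x
  proof -
    let ?S = "{i \<in> to_nat ` N. x \<in> B (from_nat i)}"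
    let ?Q = "\<lambda>a b. cR N a b \<and> a \<in> ?S \<and> b \<in> ?S"
    have up: "\<exists>tp. ttop N B x tp \<and> ?Q\<^sup>*\<^sup>* (to_nat xs) (to_nat tp) \<and> ?Q\<^sup>*\<^sup>* (to_nat tp) (to_nat xs)"
      if "xs \<in> N" "x \<in> B xs" for xs
      using that
    proof (induction "length xs" arbitrary: xs)
      case 0 then show ?case by (intro exI[of _ xs]) (auto simp: ttop_def)
    next
      case (Suc n)
      show ?case
      proof (cases "x \<in> B (butlast xs)")
        case False then show ?thesis using Suc.prems by (intro exI[of _ xs]) (auto simp: ttop_def)
      next
        case True
        have ne: "xs \<noteq> []" using Suc.hyps(2) by auto
        have bn: "butlast xs \<in> N" using f(3) Suc.prems by blast
        have "length (butlast xs) = n" using Suc.hyps(2) by simp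
        then obtain tp where tp: "ttop N B x tp" "?Q\<^sup>*\<^sup>* (to_nat (butlast xs)) (to_nat tp)"
           "?Q\<^sup>*\<^sup>* (to_nat tp) (to_nat (butlast xs))"
          using Suc.hyps(1) bn True by blast
        have e: "?Q (to_nat xs) (to_nat (butlast xs))" "?Q (to_nat (butlast xs)) (to_nat xs)"
          using cR_edge[OF Suc.prems(1) ne bn] Suc.prems bn True by auto
        have "?Q\<^sup>*\<^sup>* (to_nat xs) (to_nat (butlast xs))" "?Q\<^sup>*\<^sup>* (to_nat (butlast xs)) (to_nat xs)"
          using e by (auto intro: r_into_rtranclp simp del: mem_Collect_eq)
        then show ?thesis using tp by (meson rtranclp_trans)
      qed
    qed
    show ?thesis unfolding connected_in_def
    proof (intro ballI)
      fix i j assume "i \<in> ?S" "j \<in> ?S"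
      then obtain a b where ab: "a \<in> N" "b \<in> N" "i = to_nat a" "j = to_nat b" "x \<in> B a" "x \<in> B b" by auto
      obtain t1 where t1: "ttop N B x t1" "?Q\<^sup>*\<^sup>* (to_nat a) (to_nat t1)" using up[OF ab(1,5)] by blast
      obtain t2 where t2: "ttop N B x t2" "?Q\<^sup>*\<^sup>* (to_nat t2) (to_nat b)" using up[OF ab(2,6)] by blast
      have "t1 = t2" using f(7) t1(1) t2(1) by blast
      then show "?Q\<^sup>*\<^sup>* i j" using t1 t2 ab by (meson rtranclp_trans)
    qed
  qed
  show ?thesis unfolding tree_decomposition_def
  proof (intro conjI)
    show "finite_tree (to_nat ` N) (cR N)" by (rule ft)
    show "\<forall>i\<in>to_nat ` N. B (from_nat i) \<subseteq> A" using f(4) by auto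
    show "\<forall>x\<in>A. \<exists>i\<in>to_nat ` N. x \<in> B (from_nat i)" using f(5) by fastforce
    show "\<forall>x\<in>A. \<forall>y\<in>A. E x y \<longrightarrow> (\<exists>i\<in>to_nat ` N. x \<in> B (from_nat i) \<and> y \<in> B (from_nat i))"
      using f(6) by fastforce
    show "\<forall>x\<in>A. connected_in {i \<in> to_nat ` N. x \<in> B (from_nat i)} (cR N)" using conn by blast
  qed
qed

lemma rtd_tw:
  assumes "rtd E A N B" "\<forall>i\<in>N. real (card (B i)) - 1 \<le> w"
  shows "treewidth_at_most A E w"
  unfolding treewidth_at_most_def
  using rtd_td[OF assms(1)] assms(2) by fastforce

locale LW =
  fixes V :: "'a set" and r :: 'a and par :: "'a \<Rightarrow> 'a" and slt :: "'a \<Rightarrow> 'a \<Rightarrow> bool"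
    and E :: "'a \<Rightarrow> 'a \<Rightarrow> bool"
  assumes lw: "layered_wheel V r par slt E" and nt: "neat V r par"
begin

abbreviation "dp \<equiv> depth r par"
abbreviation "anc \<equiv> ancestor V r par"
abbreviation "ch \<equiv> children V r par"

lemma rV: "r \<in> V" using lw unfolding layered_wheel_def rooted_tree_def by blast
lemma parV: "v \<in> V \<Longrightarrow> v \<noteq> r \<Longrightarrow> par v \<in> V" using lw unfolding layered_wheel_def rooted_tree_def by blast
lemma reach: "v \<in> V \<Longrightarrow> \<exists>k. (par ^^ k) v = r" using lw unfolding layered_wheel_def rooted_tree_def by blast
lemma finch: "v \<in> V \<Longrightarrow> finite (ch v)" using lw unfolding layered_wheel_def by blast
lemma Esym: "E u v \<Longrightarrow> u \<in> V \<and> v \<in> V \<and> u \<noteq> v \<and> E v u" using lw unfolding layered_wheel_def by blast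
lemma Elay: "u \<in> layer V r par n \<Longrightarrow> v \<in> layer V r par n \<Longrightarrow> u \<noteq> v \<Longrightarrow>
          (E u v \<longleftrightarrow>
            ((left_of r par slt u v \<and> \<not> (\<exists>w\<in>layer V r par n. left_of r par slt u w \<and> left_of r par slt w v))
           \<or> (left_of r par slt v u \<and> \<not> (\<exists>w\<in>layer V r par n. left_of r par slt v w \<and> left_of r par slt w u))))"
  using lw unfolding layered_wheel_def by blast
lemma Eanc: "E u v \<Longrightarrow> dp u \<noteq> dp v \<Longrightarrow> anc u v \<or> anc v u"
  using lw unfolding layered_wheel_def by blast
lemma bound: "\<exists>B::nat. \<forall>xs. tpath V r par xs \<and> (\<forall>x\<in>set xs. tdegree V r par x = 2) \<longrightarrow> length xs \<le> B"
  using lw unfolding layered_wheel_def by blast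
lemma neat': "v \<in> V \<Longrightarrow> ch v \<noteq> {}" using nt unfolding neat_def by blast

lemma ch_iff: "c \<in> ch p \<longleftrightarrow> c \<in> V \<and> c \<noteq> r \<and> par c = p" unfolding children_def by auto

lemma slo: "p \<in> V \<Longrightarrow> strict_linear_order_on (ch p) {(a, b). a \<in> ch p \<and> b \<in> ch p \<and> slt a b}"
  using lw unfolding layered_wheel_def planar_embedding_def by blast

lemma slt_trans: "p \<in> V \<Longrightarrow> a \<in> ch p \<Longrightarrow> b \<in> ch p \<Longrightarrow> c \<in> ch p \<Longrightarrow> slt a b \<Longrightarrow> slt b c \<Longrightarrow> slt a c"
  using slo[of p] unfolding strict_linear_order_on_def trans_def by blast
lemma slt_irr: "p \<in> V \<Longrightarrow> a \<in> ch p \<Longrightarrow> \<not> slt a a"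
  using slo[of p] unfolding strict_linear_order_on_def irrefl_def by blast
lemma slt_tot: "p \<in> V \<Longrightarrow> a \<in> ch p \<Longrightarrow> b \<in> ch p \<Longrightarrow> a \<noteq> b \<Longrightarrow> slt a b \<or> slt b a"
  using slo[of p] unfolding strict_linear_order_on_def total_on_def by blast

lemma dp_reach: "v \<in> V \<Longrightarrow> (par ^^ dp v) v = r"
  unfolding depth_def using reach by (metis (mono_tags, lifting) LeastI_ex)
lemma dp_le: "(par ^^ k) v = r \<Longrightarrow> dp v \<le> k"
  unfolding depth_def by (rule Least_le)

lemma iter_ne: "v \<in> V \<Longrightarrow> k < dp v \<Longrightarrow> (par ^^ k) v \<noteq> r"
  using dp_le by fastforce

lemma iter_in: "v \<in> V \<Longrightarrow> k \<le> dp v \<Longrightarrow> (par ^^ k) v \<in> V"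
proof (induction k)
  case 0 then show ?case by simp
next
  case (Suc k)
  then have "(par ^^ k) v \<in> V" "(par ^^ k) v \<noteq> r" using iter_ne by auto
  then show ?case using parV by simp
qed

lemma dp_iter: "v \<in> V \<Longrightarrow> k \<le> dp v \<Longrightarrow> dp ((par ^^ k) v) = dp v - k"
proof -
  assume v: "v \<in> V" "k \<le> dp v"
  let ?w = "(par ^^ k) v"
  have "(par ^^ (dp v - k)) ?w = r" using dp_reach[OF v(1)] v(2)
    by (metis funpow_add le_add_diff_inverse2 o_apply)
  then have a: "dp ?w \<le> dp v - k" by (rule dp_le)
  have "(par ^^ (dp ?w + k)) v = r" using dp_reach[OF iter_in[OF v]] by (simp add: funpow_add)
  then have "dp v \<le> dp ?w + k" by (rule dp_le)
  then show ?thesis using a by simp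
qed

lemma dp_r: "dp r = 0" using dp_le[of 0 r] by simp

lemma dp0: "v \<in> V \<Longrightarrow> dp v = 0 \<Longrightarrow> v = r" using dp_reach by fastforce

lemma dp_par: "v \<in> V \<Longrightarrow> v \<noteq> r \<Longrightarrow> dp (par v) = dp v - 1 \<and> 0 < dp v"
  using dp_iter[of v 1] dp0 by fastforce

lemma anc_iff: "anc u v \<longleftrightarrow> u \<in> V \<and> v \<in> V \<and> dp u \<le> dp v \<and> u = (par ^^ (dp v - dp u)) v"
proof
  assume "anc u v"
  then obtain k where k: "u \<in> V" "v \<in> V" "k \<le> dp v" "(par ^^ k) v = u" unfolding ancestor_def by blast
  then have "dp u = dp v - k" using dp_iter by blast
  then show "u \<in> V \<and> v \<in> V \<and> dp u \<le> dp v \<and> u = (par ^^ (dp v - dp u)) v" using k by auto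
next
  assume "u \<in> V \<and> v \<in> V \<and> dp u \<le> dp v \<and> u = (par ^^ (dp v - dp u)) v"
  then show "anc u v" unfolding ancestor_def by (intro conjI exI[of _ "dp v - dp u"]) auto
qed

lemma ancV: "anc u v \<Longrightarrow> u \<in> V \<and> v \<in> V" unfolding ancestor_def by blast
lemma anc_refl: "v \<in> V \<Longrightarrow> anc v v" unfolding ancestor_def by (intro conjI exI[of _ 0]) auto
lemma anc_dp: "anc u v \<Longrightarrow> dp u \<le> dp v" using anc_iff by blast
lemma anc_eq: "anc u v \<Longrightarrow> dp u = dp v \<Longrightarrow> u = v" using anc_iff by auto

lemma anc_trans: "anc u v \<Longrightarrow> anc v w \<Longrightarrow> anc u w"
proof -
  assume a: "anc u v" "anc v w"
  then have d: "dp u \<le> dp v" "dp v \<le> dp w" and u: "u = (par ^^ (dp v - dp u)) v" and v: "v = (par ^^ (dp w - dp v)) w"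
    and V: "u \<in> V" "w \<in> V" using anc_iff by auto
  have e: "dp w - dp u = (dp v - dp u) + (dp w - dp v)" using d by simp
  have "u = (par ^^ (dp w - dp u)) w"
    unfolding e funpow_add using u v by simp
  then show ?thesis using anc_iff V d by auto
qed

lemma anc_lin: "anc a w \<Longrightarrow> anc b w \<Longrightarrow> dp a \<le> dp b \<Longrightarrow> anc a b"
proof -
  assume as: "anc a w" "anc b w" "dp a \<le> dp b"
  then have a: "a = (par ^^ (dp w - dp a)) w" and b: "b = (par ^^ (dp w - dp b)) w" and
     d: "dp b \<le> dp w" and V: "a \<in> V" "b \<in> V" using anc_iff by auto
  have "dp w - dp a = (dp b - dp a) + (dp w - dp b)" using as(3) d by simp
  then have "a = (par ^^ (dp b - dp a)) b" using a b by (simp add: funpow_add)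
  then show ?thesis using anc_iff V as(3) by auto
qed

lemma anc_antisym: "anc u v \<Longrightarrow> anc v u \<Longrightarrow> u = v"
  using anc_dp anc_eq by (meson le_antisym)

lemma anc_par: "v \<in> V \<Longrightarrow> v \<noteq> r \<Longrightarrow> anc (par v) v"
proof -
  assume v: "v \<in> V" "v \<noteq> r"
  then have "1 \<le> dp v" using dp_par[OF v] by simp
  then show ?thesis unfolding ancestor_def using v parV by (intro conjI exI[of _ 1]) auto
qed

lemma anc_ch: "c \<in> ch p \<Longrightarrow> anc p c \<and> dp c = Suc (dp p)"
  using anc_par dp_par unfolding ch_iff by fastforce

lemma anc_r: "v \<in> V \<Longrightarrow> anc r v"
  unfolding ancestor_def using dp_reach rV by blast

lemma anc_of_r: "anc u r \<Longrightarrow> u = r"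
  using anc_dp dp_r anc_eq by fastforce

lemma anc_par_iff: "v \<in> V \<Longrightarrow> v \<noteq> r \<Longrightarrow> anc u v \<longleftrightarrow> u = v \<or> anc u (par v)"
proof
  assume v: "v \<in> V" "v \<noteq> r" and a: "anc u v"
  show "u = v \<or> anc u (par v)"
  proof (cases "u = v")
    case False
    then have "dp u < dp v" using a anc_dp anc_eq by fastforce
    then have "dp u \<le> dp (par v)" using dp_par v by simp
    then show ?thesis using anc_lin[OF a anc_par[OF v]] by simp
  qed simp
next
  assume v: "v \<in> V" "v \<noteq> r" and "u = v \<or> anc u (par v)"
  then show "anc u v" using anc_refl anc_trans anc_par by blast
qed

definition up :: "'a \<Rightarrow> nat \<Rightarrow> 'a" where "up v k = (par ^^ (dp v - k)) v"

lemma up_anc: "v \<in> V \<Longrightarrow> k \<le> dp v \<Longrightarrow> anc (up v k) v \<and> dp (up v k) = k"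
proof -
  assume v: "v \<in> V" "k \<le> dp v"
  then have "dp v - k \<le> dp v" by simp
  then show ?thesis unfolding up_def ancestor_def using v iter_in dp_iter
    by (intro conjI exI[of _ "dp v - k"]) auto
qed

lemma anc_up: "anc u v \<Longrightarrow> u = up v (dp u)"
  unfolding up_def using anc_iff by blast

lemma same_dp_anc: "anc a x \<Longrightarrow> anc b x \<Longrightarrow> dp a = dp b \<Longrightarrow> a = b"
  using anc_lin anc_eq by (metis order_refl)

end

context LW begin

definition sib :: "'a \<Rightarrow> 'a \<Rightarrow> bool" where
  "sib a b \<longleftrightarrow> a \<in> V \<and> b \<in> V \<and> a \<noteq> r \<and> b \<noteq> r \<and> par a = par b \<and> a \<noteq> b"

definition lt :: "'a \<Rightarrow> 'a \<Rightarrow> bool" where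
  "lt x y \<longleftrightarrow> (\<exists>a b. sib a b \<and> slt a b \<and> anc a x \<and> anc b y)"

lemma sib_dp: "sib a b \<Longrightarrow> dp a = dp b"
proof -
  assume "sib a b"
  then have s: "a \<in> V" "b \<in> V" "a \<noteq> r" "b \<noteq> r" "par a = par b" unfolding sib_def by auto
  have "dp (par a) = dp a - 1 \<and> 0 < dp a" using dp_par s(1,3) by blast
  moreover have "dp (par b) = dp b - 1 \<and> 0 < dp b" using dp_par s(2,4) by blast
  moreover have "dp (par a) = dp (par b)" using s(5) by simp
  ultimately show ?thesis by linarith
qed

lemma sib_ch: "sib a b \<Longrightarrow> a \<in> ch (par a) \<and> b \<in> ch (par a) \<and> par a \<in> V"
  unfolding sib_def ch_iff using parV by auto

lemma pair_unique:
  assumes s: "sib a b" "anc a x" "anc b y" and s': "sib a' b'" "anc a' x" "anc b' y"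
  shows "a = a' \<and> b = b'"
proof -
  have lem: False if s: "sib a b" "anc a x" "anc b y" and s': "sib a' b'" "anc a' x" "anc b' y"
    and lt: "dp a < dp a'" for a b a' b'
  proof -
    have aa': "anc a a'" using anc_lin[OF s(2) s'(2)] lt by simp
    have m': "par a' \<in> V" "a' \<in> V" "a' \<noteq> r" using s'(1) parV unfolding sib_def by auto
    have dm': "dp (par a') = dp a' - 1" using dp_par m'(2,3) by blast
    have "anc (par a') a'" using anc_par m'(2,3) by blast
    then have "anc (par a') x" using anc_trans s'(2) by blast
    then have am: "anc a (par a')" using anc_lin[OF s(2)] dm' lt by simp
    have "par a' = par b'" "b' \<in> V" "b' \<noteq> r" using s'(1) unfolding sib_def by auto
    then have "anc (par a') b'" using anc_par by metis
    then have "anc a y" using am s'(3) anc_trans by blast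
    then have "a = b" using same_dp_anc s(3) sib_dp[OF s(1)] by blast
    then show False using s(1) unfolding sib_def by simp
  qed
  have "dp a = dp a'" using lem[OF s s'] lem[OF s' s] by fastforce
  then have aa: "a = a'" using same_dp_anc s(2) s'(2) by blast
  have "dp b = dp b'" using sib_dp s(1) s'(1) \<open>dp a = dp a'\<close> by simp
  then have "b = b'" using same_dp_anc s(3) s'(3) by blast
  then show ?thesis using aa by simp
qed

lemma lt_V: "lt x y \<Longrightarrow> x \<in> V \<and> y \<in> V" unfolding lt_def using ancV by blast

lemma lt_nanc: "lt x y \<Longrightarrow> \<not> anc x y \<and> \<not> anc y x"
proof -
  assume "lt x y"
  then obtain a b where ab: "sib a b" "slt a b" "anc a x" "anc b y" unfolding lt_def by blast
  have d: "dp a = dp b" using sib_dp ab(1) .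
  have ne: "a \<noteq> b" using ab(1) unfolding sib_def by simp
  show ?thesis
  proof (intro conjI notI)
    assume "anc x y" then have "anc a y" using ab(3) anc_trans by blast
    then show False using same_dp_anc ab(4) d ne by blast
  next
    assume "anc y x" then have "anc b x" using ab(4) anc_trans by blast
    then show False using same_dp_anc ab(3) d ne by metis
  qed
qed

lemma lt_ne: "lt x y \<Longrightarrow> x \<noteq> y" using lt_nanc lt_V anc_refl by blast

lemma lt_asym: "lt x y \<Longrightarrow> \<not> lt y x"
proof
  assume "lt x y" "lt y x"
  then obtain a b a' b' where ab: "sib a b" "slt a b" "anc a x" "anc b y"
    and ab': "sib a' b'" "slt a' b'" "anc a' y" "anc b' x" unfolding lt_def by blast
  have "sib b' a'" using ab'(1) unfolding sib_def by auto
  then have "a = b' \<and> b = a'" using pair_unique[OF ab(1,3,4)] ab' by blast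
  then have "slt b a" using ab'(2) by simp
  then have "slt a a" using slt_trans sib_ch[OF ab(1)] ab(2) by blast
  then show False using slt_irr sib_ch[OF ab(1)] by blast
qed

lemma lt_her: "lt x y \<Longrightarrow> anc x x' \<Longrightarrow> anc y y' \<Longrightarrow> lt x' y'"
  unfolding lt_def using anc_trans by blast

lemma lt_trans: "lt x y \<Longrightarrow> lt y z \<Longrightarrow> lt x z"
proof -
  assume "lt x y" "lt y z"
  then obtain a b a' b' where ab: "sib a b" "slt a b" "anc a x" "anc b y"
    and ab': "sib a' b'" "slt a' b'" "anc a' y" "anc b' z" unfolding lt_def by blast
  consider "dp b = dp a'" | "dp b < dp a'" | "dp a' < dp b" by linarith
  then show "lt x z"
  proof cases
    case 1
    then have "b = a'" using same_dp_anc ab(4) ab'(3) by blast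
    then have pp: "par a = par b'" using ab(1) ab'(1) unfolding sib_def by simp
    have pa: "par a' = par a" using ab(1) \<open>b = a'\<close> unfolding sib_def by simp
    have c: "a \<in> ch (par a)" "b \<in> ch (par a)" "b' \<in> ch (par a)" "par a \<in> V"
      using sib_ch[OF ab(1)] apply blast+
      using sib_ch[OF ab'(1)] pa apply simp
      using sib_ch[OF ab(1)] by blast
    have "slt a b'" using slt_trans[OF c(4) c(1) c(2) c(3) ab(2)] ab'(2) \<open>b = a'\<close> by simp
    moreover have "a \<noteq> b'" using slt_irr c \<open>slt a b'\<close> by blast
    ultimately have "sib a b'" using ab(1) ab'(1) pp unfolding sib_def by auto
    then show ?thesis unfolding lt_def using \<open>slt a b'\<close> ab(3) ab'(4) by blast
  next
    case 2
    have ba': "anc b a'" using anc_lin[OF ab(4) ab'(3)] 2 by simp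
    have m: "a' \<in> V" "a' \<noteq> r" "b' \<in> V" "b' \<noteq> r" "par a' = par b'" using ab'(1) unfolding sib_def by auto
    have "dp (par a') = dp a' - 1" using dp_par m by blast
    then have "dp b \<le> dp (par a')" using 2 by simp
    moreover have "anc (par a') a'" using anc_par m by blast
    ultimately have "anc b (par a')" using anc_lin[OF ba'] by blast
    moreover have "anc (par a') b'" using anc_par m by metis
    ultimately have "anc b z" using ab'(4) anc_trans by blast
    then show ?thesis unfolding lt_def using ab by blast
  next
    case 3
    have a'b: "anc a' b" using anc_lin[OF ab'(3) ab(4)] 3 by simp
    have m: "a \<in> V" "a \<noteq> r" "b \<in> V" "b \<noteq> r" "par a = par b" using ab(1) unfolding sib_def by auto
    have "dp (par b) = dp b - 1" using dp_par m by blast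
    then have "dp a' \<le> dp (par b)" using 3 by simp
    moreover have "anc (par b) b" using anc_par m by blast
    ultimately have "anc a' (par b)" using anc_lin[OF a'b] by blast
    moreover have "anc (par b) a" using anc_par m by metis
    ultimately have "anc a' x" using ab(3) anc_trans by blast
    then show ?thesis unfolding lt_def using ab' by blast
  qed
qed

lemma up_par: "v \<in> V \<Longrightarrow> Suc k \<le> dp v \<Longrightarrow> par (up v (Suc k)) = up v k"
proof -
  assume v: "v \<in> V" "Suc k \<le> dp v"
  have "dp v - k = Suc (dp v - Suc k)" using v(2) by simp
  then show ?thesis unfolding up_def by simp
qed

lemma lt_tri: "x \<in> V \<Longrightarrow> y \<in> V \<Longrightarrow> anc x y \<or> anc y x \<or> lt x y \<or> lt y x"
proof -
  assume xy: "x \<in> V" "y \<in> V"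
  show ?thesis
  proof (cases "\<exists>k. k \<le> min (dp x) (dp y) \<and> up x k \<noteq> up y k")
    case False
    show ?thesis
    proof (cases "dp x \<le> dp y")
      case True
      then have "up y (dp x) = up x (dp x)" using False by auto
      also have "up x (dp x) = x" unfolding up_def by simp
      finally show ?thesis using up_anc[OF xy(2) True] by auto
    next
      case f: False
      then have "up x (dp y) = up y (dp y)" using False by auto
      also have "up y (dp y) = y" unfolding up_def by simp
      moreover have "dp y \<le> dp x" using f by simp
      ultimately show ?thesis using up_anc[OF xy(1), of "dp y"] by auto
    qed
  next
    case True
    define k where "k = (LEAST k. k \<le> min (dp x) (dp y) \<and> up x k \<noteq> up y k)"
    have k: "k \<le> min (dp x) (dp y)" "up x k \<noteq> up y k"
      using LeastI_ex[OF True] unfolding k_def by blast+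
    have k0: "k \<noteq> 0"
    proof
      assume "k = 0"
      then have "up x k = r" "up y k = r" using up_anc[OF xy(1), of 0] up_anc[OF xy(2), of 0] dp0 ancV by auto
      then show False using k(2) by simp
    qed
    then obtain j where j: "k = Suc j" by (cases k) auto
    have "up x j = up y j"
    proof (rule ccontr)
      assume "up x j \<noteq> up y j"
      then have "k \<le> j" unfolding k_def using k(1) j by (intro Least_le) simp
      then show False using j by simp
    qed
    then have pp: "par (up x k) = par (up y k)" using up_par xy k(1) j by simp
    have a: "anc (up x k) x" "dp (up x k) = k" "anc (up y k) y" "dp (up y k) = k"
      using up_anc xy k(1) by auto
    have ne: "up x k \<noteq> r" "up y k \<noteq> r" using a k0 dp_r by auto
    have V: "up x k \<in> V" "up y k \<in> V" using a ancV by auto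
    have s: "sib (up x k) (up y k)" unfolding sib_def using V ne pp k(2) by simp
    have s2: "sib (up y k) (up x k)" unfolding sib_def using V ne pp k(2) by simp
    have "slt (up x k) (up y k) \<or> slt (up y k) (up x k)"
      using slt_tot sib_ch[OF s] k(2) by metis
    then show ?thesis unfolding lt_def using s s2 a by blast
  qed
qed

lemma left_of_lt: "x \<in> V \<Longrightarrow> y \<in> V \<Longrightarrow> dp x = dp y \<Longrightarrow> left_of r par slt x y \<longleftrightarrow> lt x y"
proof
  assume xy: "x \<in> V" "y \<in> V" "dp x = dp y" and "left_of r par slt x y"
  then obtain k where k: "k < dp x" "(par ^^ k) x \<noteq> (par ^^ k) y"
     "par ((par ^^ k) x) = par ((par ^^ k) y)" "slt ((par ^^ k) x) ((par ^^ k) y)"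
    unfolding left_of_def by blast
  let ?a = "(par ^^ k) x" and ?b = "(par ^^ k) y"
  have V: "?a \<in> V" "?b \<in> V" using iter_in xy k(1) by auto
  have ne: "?a \<noteq> r" "?b \<noteq> r" using iter_ne xy k(1) by auto
  have an: "anc ?a x" "anc ?b y" unfolding ancestor_def using V xy k(1)
    by (auto intro!: exI[of _ k])
  show "lt x y" unfolding lt_def sib_def using V ne k an by blast
next
  assume xy: "x \<in> V" "y \<in> V" "dp x = dp y" and "lt x y"
  then obtain a b where ab: "sib a b" "slt a b" "anc a x" "anc b y" unfolding lt_def by blast
  have d: "dp a = dp b" using sib_dp ab(1) .
  have ne: "a \<noteq> r" using ab(1) sib_def by auto
  have ax: "a = (par ^^ (dp x - dp a)) x" "b = (par ^^ (dp x - dp a)) y"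
    using anc_iff ab(3,4) d xy(3) by auto
  have "0 < dp a" using dp_par ab(1) sib_def by blast
  moreover have "dp a \<le> dp x" using anc_dp ab(3) by blast
  ultimately have "dp x - dp a < dp x" by simp
  then show "left_of r par slt x y" unfolding left_of_def using xy(3) ab ax sib_def
    by (intro conjI exI[of _ "dp x - dp a"]) auto
qed

lemma descend: "v \<in> V \<Longrightarrow> dp v \<le> k \<Longrightarrow> \<exists>w. anc v w \<and> dp w = k"
proof (induction "k - dp v" arbitrary: v)
  case 0 then show ?case using anc_refl by (intro exI[of _ v]) auto
next
  case (Suc n)
  obtain c where c: "c \<in> ch v" using neat' Suc.prems by blast
  then have "anc v c" "dp c = Suc (dp v)" using anc_ch by auto
  moreover have "c \<in> V" using c ch_iff by blast
  moreover have "n = k - dp c" "dp c \<le> k" using Suc.hyps(2) \<open>dp c = Suc (dp v)\<close> by auto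
  ultimately obtain w where "anc c w" "dp w = k" using Suc.hyps(1) by blast
  then show ?case using \<open>anc v c\<close> anc_trans by blast
qed

lemma lay_mem: "x \<in> layer V r par n \<longleftrightarrow> x \<in> V \<and> dp x = n" unfolding layer_def by simp

lemma slit:
  assumes "lt x u" "lt u y"
  shows "\<not> E x y"
proof
  assume e: "E x y"
  have xy: "lt x y" using lt_trans assms by blast
  have V: "x \<in> V" "y \<in> V" "u \<in> V" using lt_V assms by auto
  show False
  proof (cases "dp x = dp y")
    case False then show False using Eanc[OF e] lt_nanc[OF xy] by blast
  next
    case True
    note dxy = True
    define k where "k = dp x"
    obtain w where w: "w \<in> V" "dp w = k" "lt x w" "lt w y"
    proof (cases "k \<le> dp u")
      case True
      define w where "w = up u k"
      have w: "anc w u" "dp w = k" using up_anc[OF V(3) True] w_def by auto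
      have wV: "w \<in> V" using w ancV by blast
      have "lt x w"
        using lt_tri[OF V(1) wV] proof (elim disjE)
        assume "anc x w" then have "x = w" using anc_eq[of x w] w(2) k_def by simp
        then show ?thesis using lt_nanc[OF assms(1)] w(1) by blast
      next
        assume "anc w x" then have "w = x" using anc_eq w(2) k_def by simp
        then have "x = w" by simp
        then show ?thesis using lt_nanc[OF assms(1)] w(1) by blast
      next
        assume "lt w x" then have "lt u x" using lt_her anc_refl V w(1) by blast
        then show ?thesis using lt_asym assms(1) by blast
      qed
      moreover have "lt w y"
        using lt_tri[OF wV V(2)] proof (elim disjE)
        assume "anc w y" then have "w = y" using anc_eq w(2) k_def dxy by simp
        then have "y = w" by simp
        then show ?thesis using lt_nanc[OF assms(2)] w(1) by blast
      next
        assume "anc y w" then have "y = w" using anc_eq w(2) k_def dxy by simp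
        then show ?thesis using lt_nanc[OF assms(2)] w(1) by blast
      next
        assume "lt y w" then have "lt y u" using lt_her anc_refl V w(1) by blast
        then show ?thesis using lt_asym assms(2) by blast
      qed
      ultimately show ?thesis using that wV w(2) by blast
    next
      case False
      then obtain w where w: "anc u w" "dp w = k" using descend V(3) by (meson nat_le_linear)
      then have "lt x w" "lt w y" using lt_her assms anc_refl V by blast+
      then show ?thesis using that w ancV by blast
    qed
    have lx: "x \<in> layer V r par k" "y \<in> layer V r par k" "w \<in> layer V r par k"
      using V w k_def True lay_mem by auto
    have "x \<noteq> y" using lt_ne xy by blast
    then have "left_of r par slt x y \<and> \<not> (\<exists>w\<in>layer V r par k. left_of r par slt x w \<and> left_of r par slt w y)
       \<or> left_of r par slt y x \<and> \<not> (\<exists>w\<in>layer V r par k. left_of r par slt y w \<and> left_of r par slt w x)"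
      using Elay[OF lx(1,2)] e by blast
    moreover have "left_of r par slt x w" "left_of r par slt w y" using left_of_lt V w k_def True by auto
    moreover have "\<not> left_of r par slt y x" using left_of_lt V True lt_asym xy by auto
    ultimately show False using lx(3) by blast
  qed
qed

end

context LW begin

lemma finite_layer: "finite (layer V r par n)"
proof (induction n)
  case 0
  have "layer V r par 0 \<subseteq> {r}" using dp0 unfolding layer_def by auto
  then show ?case using finite_subset by blast
next
  case (Suc n)
  have "layer V r par (Suc n) \<subseteq> (\<Union>p\<in>layer V r par n. ch p)"
  proof
    fix x assume x: "x \<in> layer V r par (Suc n)"
    then have xV: "x \<in> V" "dp x = Suc n" unfolding layer_def by auto
    then have xr: "x \<noteq> r" using dp_r by auto
    then have "par x \<in> V" "dp (par x) = n" using parV dp_par xV by auto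
    moreover have "x \<in> ch (par x)" using xV xr ch_iff by blast
    ultimately show "x \<in> (\<Union>p\<in>layer V r par n. ch p)" unfolding layer_def by blast
  qed
  moreover have "finite (\<Union>p\<in>layer V r par n. ch p)"
    using Suc finch unfolding layer_def by auto
  ultimately show ?case using finite_subset by blast
qed

definition Bd :: nat where
  "Bd = (SOME B. \<forall>xs. tpath V r par xs \<and> (\<forall>x\<in>set xs. tdegree V r par x = 2) \<longrightarrow> length xs \<le> B)"

lemma Bd_prop: "tpath V r par xs \<Longrightarrow> (\<forall>x\<in>set xs. tdegree V r par x = 2) \<Longrightarrow> length xs \<le> Bd"
  using someI_ex[OF bound] unfolding Bd_def by blast

definition chf :: "'a \<Rightarrow> 'a" where "chf v = (SOME c. c \<in> ch v)"

lemma chf: "v \<in> V \<Longrightarrow> chf v \<in> ch v"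
  unfolding chf_def using neat' by (simp add: some_in_eq)

lemma two_desc:
  assumes x: "x \<in> V"
  shows "\<exists>y1 y2. y1 \<noteq> y2 \<and> anc x y1 \<and> anc x y2 \<and> dp y1 = dp x + (Bd + 2) \<and> dp y2 = dp x + (Bd + 2)"
proof -
  define x' where "x' = (if x = r then chf x else x)"
  have x': "x' \<in> V" "x' \<noteq> r" "anc x x'" "dp x' \<le> dp x + 1"
  proof -
    show "x' \<in> V" "x' \<noteq> r" using chf[OF x] ch_iff x unfolding x'_def by auto
    show "anc x x'" using chf[OF x] anc_ch anc_refl x unfolding x'_def by auto
    show "dp x' \<le> dp x + 1" using chf[OF x] anc_ch unfolding x'_def by auto
  qed
  define c where "c i = (chf ^^ i) x'" for i
  have cp: "c i \<in> V \<and> c i \<noteq> r \<and> anc x' (c i) \<and> dp (c i) = dp x' + i" for i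
  proof (induction i)
    case 0 then show ?case using x' anc_refl unfolding c_def by auto
  next
    case (Suc i)
    have "c (Suc i) = chf (c i)" unfolding c_def by simp
    then have "c (Suc i) \<in> ch (c i)" using chf Suc by simp
    then show ?case using Suc anc_ch anc_trans ch_iff by fastforce
  qed
  have cpar: "par (c (Suc i)) = c i" for i
  proof -
    have "c (Suc i) = chf (c i)" unfolding c_def by simp
    then show ?thesis using chf cp ch_iff by metis
  qed
  have "\<exists>i\<le>Bd. card (ch (c i)) \<noteq> 1"
  proof (rule ccontr)
    assume "\<not> (\<exists>i\<le>Bd. card (ch (c i)) \<noteq> 1)"
    then have one: "\<forall>i\<le>Bd. card (ch (c i)) = 1" by blast
    define xs where "xs = map c [0..<Suc Bd]"
    have inj: "inj c" using cp by (metis add_left_cancel injI)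
    have "tpath V r par xs"
      unfolding tpath_def
    proof (intro conjI allI impI)
      show "xs \<noteq> []" unfolding xs_def by simp
      have "inj_on c (set [0..<Suc Bd])" using inj_on_subset[OF inj] by blast
      then show "distinct xs" unfolding xs_def distinct_map by simp
      show "set xs \<subseteq> V" unfolding xs_def using cp by auto
      fix i assume "Suc i < length xs"
      then have "xs ! i = c i" "xs ! Suc i = c (Suc i)" unfolding xs_def by (auto simp del: upt_Suc)
      then show "tadj V r par (xs ! i) (xs ! Suc i)" unfolding tadj_def using cp cpar by auto
    qed
    moreover have "\<forall>y\<in>set xs. tdegree V r par y = 2"
      unfolding xs_def tdegree_def using one cp by auto
    ultimately have "length xs \<le> Bd" by (rule Bd_prop)
    then show False unfolding xs_def by simp
  qed
  then obtain i where i: "i \<le> Bd" "card (ch (c i)) \<noteq> 1" by blast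
  let ?z = "c i"
  have zV: "?z \<in> V" using cp by blast
  obtain c1 where c1: "c1 \<in> ch ?z" using neat' zV by blast
  have "ch ?z \<noteq> {c1}" using i(2) by auto
  then obtain c2 where c2: "c2 \<in> ch ?z" "c2 \<noteq> c1" using c1 by blast
  have dc: "dp c1 = Suc (dp ?z)" "dp c2 = Suc (dp ?z)" "anc ?z c1" "anc ?z c2" using c1 c2 anc_ch by auto
  have tgt: "dp c1 \<le> dp x + (Bd + 2)" "dp c2 \<le> dp x + (Bd + 2)" using dc cp[of i] x'(4) i(1) by auto
  have c12V: "c1 \<in> V" "c2 \<in> V" using c1 c2 ch_iff by auto
  obtain y1 where y1: "anc c1 y1" "dp y1 = dp x + (Bd + 2)" using descend[OF c12V(1) tgt(1)] by blast
  obtain y2 where y2: "anc c2 y2" "dp y2 = dp x + (Bd + 2)" using descend[OF c12V(2) tgt(2)] by blast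
  have "y1 \<noteq> y2"
  proof
    assume "y1 = y2"
    then have "c1 = c2" using same_dp_anc y1(1) y2(1) dc by metis
    then show False using c2 by simp
  qed
  moreover have "anc x ?z" using x'(3) cp anc_trans by blast
  ultimately show ?thesis using y1 y2 dc anc_trans by blast
qed

lemma freenode:
  "x \<in> V \<Longrightarrow> finite F \<Longrightarrow> card F < 2 ^ m \<Longrightarrow>
     \<exists>v. anc x v \<and> dp v \<le> dp x + m * (Bd + 2) \<and> (\<forall>z\<in>F. \<not> anc v z)"
proof (induction m arbitrary: x F)
  case 0 then show ?case using anc_refl by (intro exI[of _ x]) auto
next
  case (Suc m)
  obtain y1 y2 where y: "y1 \<noteq> y2" "anc x y1" "anc x y2" "dp y1 = dp x + (Bd + 2)" "dp y2 = dp x + (Bd + 2)"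
    using two_desc[OF Suc.prems(1)] by blast
  define F1 where "F1 = {z\<in>F. anc y1 z}"
  define F2 where "F2 = {z\<in>F. anc y2 z}"
  have dis: "F1 \<inter> F2 = {}"
  proof (rule ccontr)
    assume "F1 \<inter> F2 \<noteq> {}"
    then obtain z where "anc y1 z" "anc y2 z" unfolding F1_def F2_def by blast
    then have "y1 = y2" using same_dp_anc y(4,5) by metis
    then show False using y(1) by simp
  qed
  have fin: "finite F1" "finite F2" using Suc.prems(2) unfolding F1_def F2_def by auto
  have "card F1 + card F2 = card (F1 \<union> F2)" using card_Un_disjoint[OF fin dis] by simp
  also have "\<dots> \<le> card F" using Suc.prems(2) unfolding F1_def F2_def by (intro card_mono) auto
  finally have "card F1 + card F2 < 2 * 2 ^ m" using Suc.prems(3) by simp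
  then have "card F1 < 2 ^ m \<or> card F2 < 2 ^ m" by linarith
  then obtain y Fi where yF: "anc x y" "dp y = dp x + (Bd + 2)" "finite Fi" "card Fi < 2 ^ m" "Fi = {z\<in>F. anc y z}"
    using y fin unfolding F1_def F2_def by blast
  have yV: "y \<in> V" using yF(1) ancV by blast
  obtain v where v: "anc y v" "dp v \<le> dp y + m * (Bd + 2)" "\<forall>z\<in>Fi. \<not> anc v z"
    using Suc.IH[OF yV yF(3,4)] by blast
  have "\<forall>z\<in>F. \<not> anc v z"
  proof (intro ballI notI)
    fix z assume "z \<in> F" "anc v z"
    then have "z \<in> Fi" using yF(5) v(1) anc_trans by blast
    then show False using v(3) \<open>anc v z\<close> by blast
  qed
  moreover have "anc x v" using yF(1) v(1) anc_trans by blast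
  moreover have "dp v \<le> dp x + Suc m * (Bd + 2)" using v(2) yF(2) by simp
  ultimately show ?case by blast
qed

end

locale LWS = LW +
  fixes S :: "'a set" and t :: nat and Xu :: "'a \<Rightarrow> 'a set" and H :: nat
  assumes SV: "S \<subseteq> V" and finS: "finite S"
    and Xu: "\<And>v. v \<in> V \<Longrightarrow> finite (Xu v) \<and> card (Xu v) \<le> t \<and>
        (\<forall>x y. E x y \<and> dp x \<noteq> dp y \<and> anc v x \<and> \<not> anc v y \<longrightarrow> y \<in> Xu v)"
    and H1: "1 \<le> H"
    and freeex: "\<And>j. j \<in> V \<Longrightarrow> \<exists>v. anc j v \<and> dp v \<le> dp j + (H - 1) \<and> v \<in> V \<and> (\<forall>z\<in>S. \<not> anc v z)"
begin

definition free :: "'a \<Rightarrow> bool" where "free v \<longleftrightarrow> v \<in> V \<and> (\<forall>z\<in>S. \<not> anc v z)"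

fun lok :: "'a option \<Rightarrow> 'a \<Rightarrow> bool" where
  "lok None x = True" | "lok (Some u) x = lt u x"
fun rok :: "'a option \<Rightarrow> 'a \<Rightarrow> bool" where
  "rok None x = True" | "rok (Some u) x = lt x u"

definition Cont :: "nat \<Rightarrow> 'a option \<Rightarrow> 'a option \<Rightarrow> 'a set" where
  "Cont d L R = {x \<in> S. d \<le> dp x \<and> lok L x \<and> rok R x}"
definition Iset :: "nat \<Rightarrow> 'a option \<Rightarrow> 'a option \<Rightarrow> 'a set" where
  "Iset d L R = {p \<in> V. dp p = d \<and> (\<forall>u. L = Some u \<longrightarrow> \<not> lt p u) \<and> (\<forall>u. R = Some u \<longrightarrow> \<not> lt u p)}"
definition Slp :: "nat \<Rightarrow> 'a option \<Rightarrow> 'a set" where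
  "Slp d L = {y \<in> S. \<exists>u. L = Some u \<and> anc y u \<and> d \<le> dp y}"
definition Xpp :: "'a \<Rightarrow> 'a set" where
  "Xpp p = {y \<in> S. anc y p \<and> y \<noteq> p \<and> (\<exists>z\<in>S. anc p z \<and> E z y)}"
definition Bdy :: "nat \<Rightarrow> 'a option \<Rightarrow> 'a option \<Rightarrow> 'a set" where
  "Bdy d L R = Slp d L \<union> Slp d R \<union> (\<Union>p\<in>Iset d L R. Xpp p)"
definition slok :: "nat \<Rightarrow> 'a option \<Rightarrow> bool" where
  "slok d L \<longleftrightarrow> (\<forall>u. L = Some u \<longrightarrow> free u \<and> d < dp u \<and> dp u \<le> d + H)"
definition inv :: "nat \<Rightarrow> 'a option \<Rightarrow> 'a option \<Rightarrow> bool" where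
  "inv d L R \<longleftrightarrow> slok d L \<and> slok d R \<and> card (Iset d L R) \<le> 2"

lemma Xpp_sub: "p \<in> V \<Longrightarrow> Xpp p \<subseteq> Xu p"
proof
  fix y assume p: "p \<in> V" and y: "y \<in> Xpp p"
  then obtain z where z: "z \<in> S" "anc p z" "E z y" "anc y p" "y \<noteq> p" unfolding Xpp_def by blast
  have "\<not> anc p y" using z(4,5) anc_antisym by blast
  moreover have "dp z \<noteq> dp y"
  proof
    assume "dp z = dp y"
    moreover have "dp y < dp p" using z(4,5) anc_dp anc_eq by fastforce
    moreover have "dp p \<le> dp z" using z(2) anc_dp by blast
    ultimately show False by simp
  qed
  ultimately show "y \<in> Xu p" using Xu[OF p] z by blast
qed

lemma Xpp_card: "p \<in> V \<Longrightarrow> card (Xpp p) \<le> t"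
  using Xpp_sub Xu card_mono le_trans by metis

lemma Xpp_dp: "y \<in> Xpp p \<Longrightarrow> dp y < dp p"
  unfolding Xpp_def using anc_dp anc_eq by fastforce

lemma Slp_card: "slok d L \<Longrightarrow> card (Slp d L) \<le> H + 1"
proof (cases L)
  case None then show ?thesis unfolding Slp_def by simp
next
  case (Some u)
  assume sl: "slok d L"
  then have u: "free u" "d < dp u" "dp u \<le> d + H" using Some unfolding slok_def by auto
  have "Slp d L \<subseteq> up u ` {d..dp u}"
  proof
    fix y assume "y \<in> Slp d L"
    then have y: "anc y u" "d \<le> dp y" using Some unfolding Slp_def by auto
    then have "y = up u (dp y)" "dp y \<le> dp u" using anc_up anc_dp by auto
    then show "y \<in> up u ` {d..dp u}" using y by auto
  qed
  then have "card (Slp d L) \<le> card (up u ` {d..dp u})" by (intro card_mono) auto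
  also have "\<dots> \<le> card {d..dp u}" by (rule card_image_le) simp
  also have "\<dots> \<le> H + 1" using u by simp
  finally show ?thesis .
qed

lemma Iset_fin: "finite (Iset d L R)"
  using finite_layer[of d] unfolding Iset_def layer_def by (rule finite_subset[rotated]) auto

lemma Bdy_card: "inv d L R \<Longrightarrow> card (Bdy d L R) \<le> 2 * (H + 1) + 2 * t"
proof -
  assume iv: "inv d L R"
  have "card (\<Union>p\<in>Iset d L R. Xpp p) \<le> (\<Sum>p\<in>Iset d L R. card (Xpp p))"
    using Iset_fin by (rule card_UN_le)
  also have "\<dots> \<le> of_nat (card (Iset d L R)) * t"
    by (rule sum_bounded_above) (use Xpp_card in \<open>auto simp: Iset_def\<close>)
  also have "\<dots> = card (Iset d L R) * t" by simp
  also have "\<dots> \<le> 2 * t" using iv unfolding inv_def by simp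
  finally have a: "card (\<Union>p\<in>Iset d L R. Xpp p) \<le> 2 * t" .
  have b: "card (Slp d L) \<le> H + 1" "card (Slp d R) \<le> H + 1" using Slp_card iv unfolding inv_def by auto
  have "card (Bdy d L R) \<le> card (Slp d L) + card (Slp d R) + card (\<Union>p\<in>Iset d L R. Xpp p)"
    unfolding Bdy_def by (meson card_Un_le le_trans add_le_mono order_refl)
  moreover have "card (Slp d L) + card (Slp d R) + card (\<Union>p\<in>Iset d L R. Xpp p) \<le> (H + 1) + (H + 1) + 2 * t"
    using a b by (intro add_mono) auto
  ultimately show ?thesis by simp
qed

lemma Bdy_S: "Bdy d L R \<subseteq> S" unfolding Bdy_def Slp_def Xpp_def by auto
lemma Cont_S: "Cont d L R \<subseteq> S" unfolding Cont_def by auto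

lemma Cont_Bdy: "Cont d L R \<inter> Bdy d L R = {}"
proof -
  have "x \<notin> Bdy d L R" if x: "x \<in> Cont d L R" for x
  proof
    assume "x \<in> Bdy d L R"
    then consider "x \<in> Slp d L" | "x \<in> Slp d R" | p where "p \<in> Iset d L R" "x \<in> Xpp p"
      unfolding Bdy_def by blast
    then show False
    proof cases
      case 1 then obtain u where "L = Some u" "anc x u" unfolding Slp_def by blast
      then show False using x lt_nanc unfolding Cont_def by auto
    next
      case 2 then obtain u where "R = Some u" "anc x u" unfolding Slp_def by blast
      then show False using x lt_nanc unfolding Cont_def by auto
    next
      case 3 then show False using Xpp_dp x unfolding Cont_def Iset_def by fastforce
    qed
  qed
  then show ?thesis by blast
qed

lemma boundary:
  assumes sl: "slok d L" "slok d R" and x: "x \<in> Cont d L R" and y: "y \<in> S" "y \<notin> Cont d L R"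
    and e: "E x y"
  shows "y \<in> Bdy d L R"
proof (cases "dp y < d")
  case True
  have xc: "x \<in> S" "d \<le> dp x" "lok L x" "rok R x" using x unfolding Cont_def by auto
  have "anc x y \<or> anc y x" using Eanc e True xc(2) by (metis not_less)
  moreover have "\<not> anc x y" using anc_dp True xc(2) by fastforce
  ultimately have yx: "anc y x" by blast
  have xV: "x \<in> V" using xc SV by blast
  define p where "p = up x d"
  have p: "anc p x" "dp p = d" using up_anc[OF xV xc(2)] p_def by auto
  have yp: "anc y p" using anc_lin[OF yx p(1)] True p(2) by simp
  have ypn: "y \<noteq> p" using True p(2) by auto
  have pI: "p \<in> Iset d L R"
    unfolding Iset_def
  proof (intro CollectI conjI allI impI)
    show "p \<in> V" using p ancV by blast
    show "dp p = d" by (rule p(2))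
    fix u assume "L = Some u"
    then have "lt u x" using xc by simp
    show "\<not> lt p u"
    proof
      assume "lt p u" then have "lt x u" using lt_her p(1) anc_refl lt_V by blast
      then show False using lt_asym \<open>lt u x\<close> by blast
    qed
  next
    fix u assume "R = Some u"
    then have "lt x u" using xc by simp
    show "\<not> lt u p"
    proof
      assume "lt u p" then have "lt u x" using lt_her p(1) anc_refl lt_V by blast
      then show False using lt_asym \<open>lt x u\<close> by blast
    qed
  qed
  have "y \<in> Xpp p" unfolding Xpp_def using y(1) yp ypn xc(1) p(1) Esym e by blast
  then show ?thesis unfolding Bdy_def using pI by blast
next
  case False
  have xc: "x \<in> S" "d \<le> dp x" "lok L x" "rok R x" using x unfolding Cont_def by auto
  have yV: "y \<in> V" using y SV by blast
  have "\<not> lok L y \<or> \<not> rok R y" using y False unfolding Cont_def by auto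
  then show ?thesis
  proof
    assume nl: "\<not> lok L y"
    then obtain u where u: "L = Some u" "\<not> lt u y" by (cases L) auto
    have fu: "free u" using sl(1) u unfolding slok_def by blast
    then have uV: "u \<in> V" unfolding free_def by blast
    have "lt u x" using xc u by simp
    show ?thesis
      using lt_tri[OF yV uV] proof (elim disjE)
      assume "anc y u" then show ?thesis unfolding Bdy_def Slp_def using u y False by auto
    next
      assume "anc u y" then show ?thesis using fu y unfolding free_def by blast
    next
      assume "lt y u" then show ?thesis using slit \<open>lt u x\<close> Esym e by blast
    qed (use u in blast)
  next
    assume nr: "\<not> rok R y"
    then obtain u where u: "R = Some u" "\<not> lt y u" by (cases R) auto
    have fu: "free u" using sl(2) u unfolding slok_def by blast
    then have uV: "u \<in> V" unfolding free_def by blast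
    have "lt x u" using xc u by simp
    show ?thesis
      using lt_tri[OF yV uV] proof (elim disjE)
      assume "anc y u" then show ?thesis unfolding Bdy_def Slp_def using u y False by auto
    next
      assume "anc u y" then show ?thesis using fu y unfolding free_def by blast
    next
      assume "lt u y" then show ?thesis using slit \<open>lt x u\<close> e by blast
    qed (use u in blast)
  qed
qed

end

lemma tglue:
  assumes C: "C = D \<union> C1 \<union> C2" "D \<inter> C1 = {}" "D \<inter> C2 = {}" "C1 \<inter> C2 = {}" "C \<inter> Bd = {}"
    and Bs: "Bd1 \<subseteq> Bd \<union> D" "Bd2 \<subseteq> Bd \<union> D"
    and bnd1: "\<forall>x\<in>C1. \<forall>y\<in>C \<union> Bd. E x y \<and> y \<notin> C1 \<longrightarrow> y \<in> Bd1"
    and bnd2: "\<forall>x\<in>C2. \<forall>y\<in>C \<union> Bd. E x y \<and> y \<notin> C2 \<longrightarrow> y \<in> Bd2"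
    and Esy: "\<forall>x y. E x y \<longrightarrow> E y x"
    and r1: "rtd E (C1 \<union> Bd1) N1 B1" "Bd1 \<subseteq> B1 []" "\<forall>i\<in>N1. card (B1 i) \<le> K"
    and r2: "rtd E (C2 \<union> Bd2) N2 B2" "Bd2 \<subseteq> B2 []" "\<forall>i\<in>N2. card (B2 i) \<le> K"
    and cb: "card (Bd \<union> D) \<le> K"
  shows "\<exists>N B. rtd E (C \<union> Bd) N B \<and> Bd \<subseteq> B [] \<and> (\<forall>i\<in>N. card (B i) \<le> K)"
proof -
  let ?\<beta> = "Bd \<union> D"
  have eqA: "?\<beta> \<union> (C1 \<union> Bd1) \<union> (C2 \<union> Bd2) = C \<union> Bd" using C Bs by blast
  have g: "rtd E (?\<beta> \<union> (C1 \<union> Bd1) \<union> (C2 \<union> Bd2)) ({[]} \<union> Cons 0 ` N1 \<union> Cons 1 ` N2) (gB ?\<beta> B1 B2)"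
  proof (rule glue[OF r1(1) r2(1)])
    show "(C1 \<union> Bd1) \<inter> ?\<beta> \<subseteq> B1 []" using C r1(2) by blast
    show "(C2 \<union> Bd2) \<inter> ?\<beta> \<subseteq> B2 []" using C r2(2) by blast
    show "(C1 \<union> Bd1) \<inter> (C2 \<union> Bd2) \<subseteq> ?\<beta>" using C Bs by blast
    show "\<forall>x\<in>?\<beta> \<union> (C1 \<union> Bd1) \<union> (C2 \<union> Bd2). \<forall>y\<in>?\<beta> \<union> (C1 \<union> Bd1) \<union> (C2 \<union> Bd2). E x y \<longrightarrow>
       (x \<in> ?\<beta> \<and> y \<in> ?\<beta>) \<or> (x \<in> C1 \<union> Bd1 \<and> y \<in> C1 \<union> Bd1) \<or> (x \<in> C2 \<union> Bd2 \<and> y \<in> C2 \<union> Bd2)"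
    proof (intro ballI impI)
      fix x y assume xy: "x \<in> ?\<beta> \<union> (C1 \<union> Bd1) \<union> (C2 \<union> Bd2)" "y \<in> ?\<beta> \<union> (C1 \<union> Bd1) \<union> (C2 \<union> Bd2)" "E x y"
      then have xy': "x \<in> C \<union> Bd" "y \<in> C \<union> Bd" using eqA by auto
      have yx: "E y x" using Esy xy(3) by blast
      show "(x \<in> ?\<beta> \<and> y \<in> ?\<beta>) \<or> (x \<in> C1 \<union> Bd1 \<and> y \<in> C1 \<union> Bd1) \<or> (x \<in> C2 \<union> Bd2 \<and> y \<in> C2 \<union> Bd2)"
      proof (cases "x \<in> C1 \<or> y \<in> C1")
        case True
        then show ?thesis using bnd1 xy' xy(3) yx by blast
      next
        case n1: False
        show ?thesis
        proof (cases "x \<in> C2 \<or> y \<in> C2")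
          case True
          then show ?thesis using bnd2 xy' xy(3) yx by blast
        next
          case False
          then show ?thesis using n1 xy' C by blast
        qed
      qed
    qed
  qed
  show ?thesis
  proof (intro exI conjI)
    show "rtd E (C \<union> Bd) ({[]} \<union> Cons 0 ` N1 \<union> Cons 1 ` N2) (gB ?\<beta> B1 B2)" using g eqA by simp
    show "Bd \<subseteq> gB ?\<beta> B1 B2 []" by (simp add: gB_def)
    show "\<forall>i\<in>{[]} \<union> Cons 0 ` N1 \<union> Cons 1 ` N2. card (gB ?\<beta> B1 B2 i) \<le> K"
      using cb r1(3) r2(3) by (auto simp: gB_def)
  qed
qed

context LWS begin

lemma lt_sd: "a \<in> V \<Longrightarrow> b \<in> V \<Longrightarrow> dp a = dp b \<Longrightarrow> a \<noteq> b \<Longrightarrow> lt a b \<or> lt b a"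
  using lt_tri anc_eq by metis

lemma mid3:
  assumes "finite J" "3 \<le> card J" "\<forall>q\<in>J. q \<in> V \<and> dp q = k"
  shows "\<exists>j1 j j2. j1 \<in> J \<and> j \<in> J \<and> j2 \<in> J \<and> lt j1 j \<and> lt j j2"
proof -
  obtain T where T: "T \<subseteq> J" "card T = 3" using obtain_subset_with_card_n[OF assms(2)] by metis
  then obtain a b c where abc: "T = {a,b,c}" "a \<noteq> b" "b \<noteq> c" "a \<noteq> c" using card_3_iff by metis
  have inJ: "a \<in> J" "b \<in> J" "c \<in> J" using T abc by auto
  have V: "a \<in> V" "b \<in> V" "c \<in> V" "dp a = k" "dp b = k" "dp c = k" using inJ assms(3) by auto
  have ab: "lt a b \<or> lt b a" using lt_sd V abc by metis
  have bc: "lt b c \<or> lt c b" using lt_sd V abc by metis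
  have ac: "lt a c \<or> lt c a" using lt_sd V abc by metis
  show ?thesis using ab bc ac inJ by (meson lt_trans)
qed

lemma ext_q: "dp q \<le> dp u \<Longrightarrow> anc u u' \<Longrightarrow> (lt q u' \<longleftrightarrow> lt q u) \<and> (lt u' q \<longleftrightarrow> lt u q)"
proof -
  assume d: "dp q \<le> dp u" and a: "anc u u'"
  have uV: "u \<in> V" using a ancV by blast
  have "lt q u" if "lt q u'"
  proof -
    have qV: "q \<in> V" using lt_V that by blast
    show ?thesis using lt_tri[OF qV uV] proof (elim disjE)
      assume "anc q u" then show ?thesis using anc_trans a lt_nanc that by blast
    next
      assume "anc u q" then have "u = q" using anc_eq anc_dp d by (metis le_antisym)
      then show ?thesis using a lt_nanc that by blast
    next
      assume "lt u q" then show ?thesis using lt_her a anc_refl qV lt_asym that by blast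
    qed
  qed
  moreover have "lt u q" if "lt u' q"
  proof -
    have qV: "q \<in> V" using lt_V that by blast
    show ?thesis using lt_tri[OF qV uV] proof (elim disjE)
      assume "anc q u" then show ?thesis using anc_trans a lt_nanc that by blast
    next
      assume "anc u q" then have "u = q" using anc_eq anc_dp d by (metis le_antisym)
      then show ?thesis using a lt_nanc that by blast
    next
      assume "lt q u" then show ?thesis using lt_her a anc_refl qV lt_asym that by blast
    qed
  qed
  moreover have "lt q u'" if "lt q u" using that lt_her a anc_refl lt_V by blast
  moreover have "lt u' q" if "lt u q" using that lt_her a anc_refl lt_V by blast
  ultimately show ?thesis by blast
qed

lemma ext_S: "free u \<Longrightarrow> anc u u' \<Longrightarrow> x \<in> S \<Longrightarrow> (lt x u' \<longleftrightarrow> lt x u) \<and> (lt u' x \<longleftrightarrow> lt u x)"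
proof -
  assume f: "free u" and a: "anc u u'" and x: "x \<in> S"
  have uV: "u \<in> V" "x \<in> V" using f x SV unfolding free_def by auto
  have nux: "\<not> anc u x" using f x unfolding free_def by blast
  have "lt x u" if "lt x u'"
    using lt_tri[OF uV(2,1)] proof (elim disjE)
    assume "anc x u" then show ?thesis using anc_trans a lt_nanc that by blast
  next
    assume "anc u x" then show ?thesis using nux by blast
  next
    assume "lt u x" then show ?thesis using lt_her a anc_refl uV lt_asym that by blast
  qed
  moreover have "lt u x" if "lt u' x"
    using lt_tri[OF uV(2,1)] proof (elim disjE)
    assume "anc x u" then show ?thesis using anc_trans a lt_nanc that by blast
  next
    assume "anc u x" then show ?thesis using nux by blast
  next
    assume "lt x u" then show ?thesis using lt_her a anc_refl uV lt_asym that by blast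
  qed
  moreover have "lt x u'" if "lt x u" using that lt_her a anc_refl lt_V by blast
  moreover have "lt u' x" if "lt u x" using that lt_her a anc_refl lt_V by blast
  ultimately show ?thesis by blast
qed

end

context LWS begin

abbreviation "KK \<equiv> 3 * (H + 1) + 2 * t"

lemma nl: "dp p \<le> dp v \<Longrightarrow> \<not> lt v p \<Longrightarrow> lt v u' \<Longrightarrow> p \<in> V \<Longrightarrow> \<not> lt u' p"
proof
  assume d: "dp p \<le> dp v" and n: "\<not> lt v p" and vu: "lt v u'" and pV: "p \<in> V" and up: "lt u' p"
  have vV: "v \<in> V" using lt_V vu by blast
  show False using lt_tri[OF pV vV] proof (elim disjE)
    assume "anc p v" then show False using lt_her[OF up] anc_refl lt_V vu lt_asym by blast
  next
    assume "anc v p" then have "v = p" using anc_eq anc_dp d by (metis le_antisym)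
    then show False using up vu lt_asym by blast
  next
    assume "lt p v" then show False using lt_trans[OF up] vu lt_asym by blast
  qed (use n in blast)
qed

lemma nr: "dp p \<le> dp v \<Longrightarrow> \<not> lt p v \<Longrightarrow> lt u v \<Longrightarrow> p \<in> V \<Longrightarrow> \<not> lt p u"
proof
  assume d: "dp p \<le> dp v" and n: "\<not> lt p v" and uv: "lt u v" and pV: "p \<in> V" and pu: "lt p u"
  have vV: "v \<in> V" using lt_V uv by blast
  show False using lt_tri[OF pV vV] proof (elim disjE)
    assume "anc p v" then show False using lt_her[OF pu] anc_refl lt_V uv lt_asym by blast
  next
    assume "anc v p" then have "v = p" using anc_eq anc_dp d by (metis le_antisym)
    then show False using pu uv lt_asym by blast
  next
    assume "lt v p" then show False using lt_trans[OF _ pu] uv lt_asym by blast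
  qed (use n in blast)
qed

lemma Iset_sub1:
  assumes "dp v \<ge> k" "\<forall>u. R = Some u \<longrightarrow> lt v u"
  shows "Iset k L (Some v) \<subseteq> Iset k L R"
  using assms nl unfolding Iset_def by auto

lemma Iset_sub2:
  assumes "dp v \<ge> k" "\<forall>u. L = Some u \<longrightarrow> lt u v"
  shows "Iset k (Some v) R \<subseteq> Iset k L R"
  using assms nr unfolding Iset_def by auto

lemma narrow:
  assumes iv: "inv d L R" and c3: "3 \<le> card (Iset (Suc d) L R)"
  obtains v where "inv d L (Some v)" "inv d (Some v) R"
    "card (Iset (Suc d) L (Some v)) < card (Iset (Suc d) L R)"
    "card (Iset (Suc d) (Some v) R) < card (Iset (Suc d) L R)"
    "free v" "d < dp v" "dp v \<le> d + H"
    "\<forall>u. L = Some u \<longrightarrow> lt u v" "\<forall>u. R = Some u \<longrightarrow> lt v u"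
proof -
  let ?J = "Iset (Suc d) L R"
  have sl: "slok d L" "slok d R" using iv unfolding inv_def by auto
  obtain j1 j j2 where jj: "j1 \<in> ?J" "j \<in> ?J" "j2 \<in> ?J" "lt j1 j" "lt j j2"
    using mid3[OF Iset_fin c3, of "Suc d"] unfolding Iset_def by blast
  have jV: "j \<in> V" "dp j = Suc d" using jj(2) unfolding Iset_def by auto
  have hl: "lt u j" if L: "L = Some u" for u
  proof -
    have fu: "free u" "d < dp u" using sl(1) L unfolding slok_def by auto
    have uV: "u \<in> V" using fu unfolding free_def by blast
    have nj: "\<not> lt j u" "\<not> lt j1 u" using jj L unfolding Iset_def by auto
    show ?thesis using lt_tri[OF jV(1) uV] proof (elim disjE)
      assume "anc j u" then show ?thesis using lt_her[OF jj(4)] anc_refl lt_V jj(4) nj by blast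
    next
      assume "anc u j" then have "u = j" using anc_dp anc_eq jV fu by (metis Suc_leI le_antisym)
      then show ?thesis using jj(4) nj by simp
    qed (use nj in blast)
  qed
  have hr: "lt j u" if R: "R = Some u" for u
  proof -
    have fu: "free u" "d < dp u" using sl(2) R unfolding slok_def by auto
    have uV: "u \<in> V" using fu unfolding free_def by blast
    have nj: "\<not> lt u j" "\<not> lt u j2" using jj(2,3) R unfolding Iset_def by auto
    consider "anc j u" | "anc u j" | "lt j u" | "lt u j" using lt_tri[OF jV(1) uV] by blast
    then show ?thesis
    proof cases
      case 1 then show ?thesis using lt_her[OF jj(5)] anc_refl lt_V jj(5) nj by blast
    next
      case 2 then have "u = j" using anc_dp anc_eq jV fu by (metis Suc_leI le_antisym)
      then show ?thesis using jj(5) nj by simp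
    next
      case 3 then show ?thesis .
    next
      case 4 then show ?thesis using nj by simp
    qed
  qed
  obtain v where v: "anc j v" "dp v \<le> dp j + (H - 1)" "v \<in> V" "\<forall>z\<in>S. \<not> anc v z"
    using freeex[OF jV(1)] by blast
  have fv: "free v" using v unfolding free_def by blast
  have "dp j \<le> dp v" using anc_dp[OF v(1)] .
  then have dv: "d < dp v" "dp v \<le> d + H" "Suc d \<le> dp v" using v(2) jV(2) H1 by auto
  have hl': "\<forall>u. L = Some u \<longrightarrow> lt u v" using hl lt_her v(1) anc_refl lt_V by blast
  have hr': "\<forall>u. R = Some u \<longrightarrow> lt v u" using hr lt_her v(1) anc_refl lt_V by blast
  have s1: "Iset d L (Some v) \<subseteq> Iset d L R" using Iset_sub1 dv hr' by simp
  have s2: "Iset d (Some v) R \<subseteq> Iset d L R" using Iset_sub2 dv hl' by simp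
  have slv: "slok d (Some v)" unfolding slok_def using fv dv by auto
  have i1: "inv d L (Some v)" unfolding inv_def using sl slv iv card_mono[OF Iset_fin s1]
    unfolding inv_def by auto
  have i2: "inv d (Some v) R" unfolding inv_def using sl slv iv card_mono[OF Iset_fin s2]
    unfolding inv_def by auto
  have J1: "Iset (Suc d) L (Some v) \<subset> ?J"
  proof
    show "Iset (Suc d) L (Some v) \<subseteq> ?J" using Iset_sub1 dv hr' by simp
    have "lt v j2" using lt_her[OF jj(5) v(1)] anc_refl lt_V jj(5) by blast
    then have "j2 \<notin> Iset (Suc d) L (Some v)" unfolding Iset_def by auto
    then show "Iset (Suc d) L (Some v) \<noteq> ?J" using jj(3) by blast
  qed
  have J2: "Iset (Suc d) (Some v) R \<subset> ?J"
  proof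
    show "Iset (Suc d) (Some v) R \<subseteq> ?J" using Iset_sub2 dv hl' by simp
    have "lt j1 v" using lt_her[OF jj(4) _ v(1)] anc_refl lt_V jj(4) by blast
    then have "j1 \<notin> Iset (Suc d) (Some v) R" unfolding Iset_def by auto
    then show "Iset (Suc d) (Some v) R \<noteq> ?J" using jj(1) by blast
  qed
  show ?thesis
    using that[OF i1 i2 psubset_card_mono[OF Iset_fin J1] psubset_card_mono[OF Iset_fin J2] fv dv(1,2) hl' hr'] .
qed

end

context LWS begin

definition CR :: "nat \<Rightarrow> 'a option \<Rightarrow> 'a option \<Rightarrow> bool" where
  "CR d L R \<longleftrightarrow> (\<exists>N B. rtd E (Cont d L R \<union> Bdy d L R) N B \<and> Bdy d L R \<subseteq> B [] \<and> (\<forall>i\<in>N. card (B i) \<le> KK))"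

lemma Esy: "\<forall>x y. E x y \<longrightarrow> E y x" using Esym by blast

lemma narrow_step:
  assumes iv: "inv d L R" and fv: "free v" "d < dp v" "dp v \<le> d + H"
    and hl: "\<forall>u. L = Some u \<longrightarrow> lt u v" and hr: "\<forall>u. R = Some u \<longrightarrow> lt v u"
    and i1: "inv d L (Some v)" and i2: "inv d (Some v) R"
    and r1: "CR d L (Some v)" and r2: "CR d (Some v) R"
  shows "CR d L R"
proof -
  obtain N1 B1 where R1: "rtd E (Cont d L (Some v) \<union> Bdy d L (Some v)) N1 B1"
      "Bdy d L (Some v) \<subseteq> B1 []" "\<forall>i\<in>N1. card (B1 i) \<le> KK" using r1 unfolding CR_def by blast
  obtain N2 B2 where R2: "rtd E (Cont d (Some v) R \<union> Bdy d (Some v) R) N2 B2"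
      "Bdy d (Some v) R \<subseteq> B2 []" "\<forall>i\<in>N2. card (B2 i) \<le> KK" using r2 unfolding CR_def by blast
  have sl: "slok d L" "slok d R" using iv unfolding inv_def by auto
  have slv: "slok d (Some v)" using i1 unfolding inv_def by auto
  have vV: "v \<in> V" using fv unfolding free_def by blast
  define Dn where "Dn = {y \<in> Cont d L R. anc y v}"
  let ?C = "Cont d L R" and ?C1 = "Cont d L (Some v)" and ?C2 = "Cont d (Some v) R"
  have cov: "?C = Dn \<union> ?C1 \<union> ?C2"
  proof
    show "?C \<subseteq> Dn \<union> ?C1 \<union> ?C2"
    proof
      fix x assume x: "x \<in> ?C"
      then have xS: "x \<in> S" "x \<in> V" using SV unfolding Cont_def by auto
      show "x \<in> Dn \<union> ?C1 \<union> ?C2" using lt_tri[OF xS(2) vV] proof (elim disjE)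
        assume "anc x v" then show ?thesis using x unfolding Dn_def by blast
      next
        assume "anc v x" then show ?thesis using fv xS unfolding free_def by blast
      next
        assume "lt x v" then show ?thesis using x unfolding Cont_def by auto
      next
        assume "lt v x" then show ?thesis using x unfolding Cont_def by auto
      qed
    qed
    have "?C1 \<subseteq> ?C"
    proof
      fix x assume "x \<in> ?C1"
      then have "x \<in> S" "d \<le> dp x" "lok L x" "lt x v" unfolding Cont_def by auto
      moreover have "rok R x" using hr lt_trans \<open>lt x v\<close> by (cases R) auto
      ultimately show "x \<in> ?C" unfolding Cont_def by auto
    qed
    moreover have "?C2 \<subseteq> ?C"
    proof
      fix x assume "x \<in> ?C2"
      then have "x \<in> S" "d \<le> dp x" "rok R x" "lt v x" unfolding Cont_def by auto
      moreover have "lok L x" using hl lt_trans \<open>lt v x\<close> by (cases L) auto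
      ultimately show "x \<in> ?C" unfolding Cont_def by auto
    qed
    ultimately show "Dn \<union> ?C1 \<union> ?C2 \<subseteq> ?C" unfolding Dn_def by blast
  qed
  have d1: "Dn \<inter> ?C1 = {}" using lt_nanc unfolding Dn_def Cont_def by auto
  have d2: "Dn \<inter> ?C2 = {}" using lt_nanc unfolding Dn_def Cont_def by auto
  have d12: "?C1 \<inter> ?C2 = {}" using lt_asym unfolding Cont_def by auto
  have slpv: "Slp d (Some v) \<subseteq> Bdy d L R \<union> Dn"
  proof
    fix y assume y: "y \<in> Slp d (Some v)"
    then have yy: "y \<in> S" "anc y v" "d \<le> dp y" unfolding Slp_def by auto
    have yV: "y \<in> V" using yy SV by blast
    show "y \<in> Bdy d L R \<union> Dn"
    proof (cases "lok L y \<and> rok R y")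
      case True then show ?thesis using yy unfolding Dn_def Cont_def by auto
    next
      case False
      then consider "\<not> lok L y" | "\<not> rok R y" by blast
      then show ?thesis
      proof cases
        case 1
        then obtain u where u: "L = Some u" "\<not> lt u y" by (cases L) auto
        have fu: "free u" using sl(1) u unfolding slok_def by blast
        have uV: "u \<in> V" using fu unfolding free_def by blast
        show ?thesis using lt_tri[OF yV uV] proof (elim disjE)
          assume "anc y u" then show ?thesis unfolding Bdy_def Slp_def using u yy by auto
        next
          assume "anc u y" then show ?thesis using fu yy unfolding free_def by blast
        next
          assume "lt y u" then have "lt v u" using lt_her yy(2) anc_refl uV by blast
          then show ?thesis using hl u lt_asym by blast
        qed (use u in blast)
      next
        case 2
        then obtain u where u: "R = Some u" "\<not> lt y u" by (cases R) auto
        have fu: "free u" using sl(2) u unfolding slok_def by blast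
        have uV: "u \<in> V" using fu unfolding free_def by blast
        show ?thesis using lt_tri[OF yV uV] proof (elim disjE)
          assume "anc y u" then show ?thesis unfolding Bdy_def Slp_def using u yy by auto
        next
          assume "anc u y" then show ?thesis using fu yy unfolding free_def by blast
        next
          assume "lt u y" then have "lt u v" using lt_her yy(2) anc_refl uV by blast
          then show ?thesis using hr u lt_asym by blast
        qed (use u in blast)
      qed
    qed
  qed
  have b1: "Bdy d L (Some v) \<subseteq> Bdy d L R \<union> Dn"
    using slpv Iset_sub1[of d v R L] fv(2) hr unfolding Bdy_def by auto
  have b2: "Bdy d (Some v) R \<subseteq> Bdy d L R \<union> Dn"
    using slpv Iset_sub2[of d v L R] fv(2) hl unfolding Bdy_def by auto
  have bnd1: "\<forall>x\<in>?C1. \<forall>y\<in>?C \<union> Bdy d L R. E x y \<and> y \<notin> ?C1 \<longrightarrow> y \<in> Bdy d L (Some v)"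
    using boundary[OF sl(1) slv] Cont_S Bdy_S by blast
  have bnd2: "\<forall>x\<in>?C2. \<forall>y\<in>?C \<union> Bdy d L R. E x y \<and> y \<notin> ?C2 \<longrightarrow> y \<in> Bdy d (Some v) R"
    using boundary[OF slv sl(2)] Cont_S Bdy_S by blast
  have "Dn \<subseteq> Slp d (Some v)" unfolding Dn_def Slp_def Cont_def by auto
  moreover have "finite (Slp d (Some v))" using finS unfolding Slp_def by simp
  ultimately have "card Dn \<le> card (Slp d (Some v))" by (simp add: card_mono)
  then have cD: "card Dn \<le> H + 1" using Slp_card[OF slv] by linarith
  have cB: "card (Bdy d L R) \<le> 2 * (H + 1) + 2 * t" using Bdy_card iv by blast
  have "card (Bdy d L R) + card Dn \<le> (2 * (H + 1) + 2 * t) + (H + 1)" using cD cB by (rule add_mono[OF _ _] | simp)+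
  then have "card (Bdy d L R \<union> Dn) \<le> (2 * (H + 1) + 2 * t) + (H + 1)" using card_Un_le[of "Bdy d L R" Dn] by (rule le_trans[rotated])
  then have "card (Bdy d L R \<union> Dn) \<le> KK" by simp
  then show ?thesis unfolding CR_def
    using tglue[OF cov d1 d2 d12 Cont_Bdy b1 b2 bnd1 bnd2 Esy R1 R2] by blast
qed

definition extf :: "nat \<Rightarrow> 'a \<Rightarrow> 'a" where "extf d u = (if dp u = Suc d then chf u else u)"

lemma ext_u:
  assumes "slok d (Some u)"
  shows "anc u (extf d u) \<and> free (extf d u) \<and> Suc d < dp (extf d u) \<and> dp (extf d u) \<le> Suc d + H
     \<and> (\<forall>y\<in>S. anc y (extf d u) \<longrightarrow> anc y u)"
proof -
  have u: "free u" "d < dp u" "dp u \<le> d + H" using assms unfolding slok_def by auto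
  have uV: "u \<in> V" using u unfolding free_def by blast
  show ?thesis
  proof (cases "dp u = Suc d")
    case True
    then have e: "extf d u = chf u" unfolding extf_def by simp
    have c: "chf u \<in> ch u" using chf uV by blast
    then have a: "anc u (chf u)" "dp (chf u) = Suc (dp u)" using anc_ch by auto
    have cV: "chf u \<in> V" "chf u \<noteq> r" "par (chf u) = u" using c ch_iff by auto
    have f: "free (chf u)" using u a anc_trans cV unfolding free_def by blast
    have y: "\<forall>y\<in>S. anc y (chf u) \<longrightarrow> anc y u"
    proof (intro ballI impI)
      fix y assume "y \<in> S" "anc y (chf u)"
      then have "y = chf u \<or> anc y u" using anc_par_iff[OF cV(1,2)] cV(3) by simp
      then show "anc y u" using f \<open>y \<in> S\<close> anc_refl cV unfolding free_def by blast
    qed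
    show ?thesis using e a f y True H1 by auto
  next
    case False
    then have e: "extf d u = u" unfolding extf_def by simp
    show ?thesis using e u False anc_refl uV by auto
  qed
qed

lemma down_step:
  assumes iv: "inv d L R" and c2: "card (Iset (Suc d) L R) \<le> 2"
  shows "inv (Suc d) (map_option (extf d) L) (map_option (extf d) R) \<and>
     (CR (Suc d) (map_option (extf d) L) (map_option (extf d) R) \<longrightarrow> CR d L R)"
proof -
  let ?L = "map_option (extf d) L" and ?R = "map_option (extf d) R"
  have sl: "slok d L" "slok d R" using iv unfolding inv_def by auto
  have slx: "slok (Suc d) (map_option (extf d) X)" if "slok d X" for X
  proof (cases X)
    case (Some u)
    then have "slok d (Some u)" using that by simp
    from ext_u[OF this] show ?thesis unfolding slok_def using Some by simp
  qed (simp add: slok_def)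
  have sl': "slok (Suc d) ?L" "slok (Suc d) ?R" using slx sl by auto
  have Ieq: "Iset (Suc d) ?L ?R = Iset (Suc d) L R"
  proof -
    have "(\<forall>u. ?L = Some u \<longrightarrow> \<not> lt q u) \<longleftrightarrow> (\<forall>u. L = Some u \<longrightarrow> \<not> lt q u)" if "dp q = Suc d" for q
    proof (cases L)
      case (Some u)
      have "dp q \<le> dp u" using sl(1) Some that unfolding slok_def by auto
      moreover have "anc u (extf d u)" using ext_u sl(1) Some by blast
      ultimately have "lt q (extf d u) \<longleftrightarrow> lt q u" using ext_q by blast
      then show ?thesis using Some by simp
    qed simp
    moreover have "(\<forall>u. ?R = Some u \<longrightarrow> \<not> lt u q) \<longleftrightarrow> (\<forall>u. R = Some u \<longrightarrow> \<not> lt u q)" if "dp q = Suc d" for q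
    proof (cases R)
      case (Some u)
      have "dp q \<le> dp u" using sl(2) Some that unfolding slok_def by auto
      moreover have "anc u (extf d u)" using ext_u sl(2) Some by blast
      ultimately have "lt (extf d u) q \<longleftrightarrow> lt u q" using ext_q by blast
      then show ?thesis using Some by simp
    qed simp
    ultimately show ?thesis unfolding Iset_def by auto
  qed
  have inv': "inv (Suc d) ?L ?R" unfolding inv_def using sl' Ieq c2 by simp
  define Dd where "Dd = {x \<in> Cont d L R. dp x = d}"
  have Ceq: "Cont (Suc d) ?L ?R = {x \<in> Cont d L R. Suc d \<le> dp x}"
  proof -
    have "lok ?L x \<longleftrightarrow> lok L x" if "x \<in> S" for x
    proof (cases L)
      case (Some u)
      have f: "free u" using sl(1) Some unfolding slok_def by blast
      have "anc u (extf d u)" using ext_u sl(1) Some by blast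
      then have "lt (extf d u) x \<longleftrightarrow> lt u x" using ext_S[OF f _ that] by blast
      then show ?thesis using Some by simp
    qed simp
    moreover have "rok ?R x \<longleftrightarrow> rok R x" if "x \<in> S" for x
    proof (cases R)
      case (Some u)
      have f: "free u" using sl(2) Some unfolding slok_def by blast
      have "anc u (extf d u)" using ext_u sl(2) Some by blast
      then have "lt x (extf d u) \<longleftrightarrow> lt x u" using ext_S[OF f _ that] by blast
      then show ?thesis using Some by simp
    qed simp
    ultimately show ?thesis unfolding Cont_def by auto
  qed
  have DdI: "Dd \<subseteq> Iset d L R"
  proof
    fix x assume "x \<in> Dd"
    then have x: "x \<in> S" "dp x = d" "lok L x" "rok R x" unfolding Dd_def Cont_def by auto
    have "\<not> lt x u" if "L = Some u" for u using x that lt_asym by auto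
    moreover have "\<not> lt u x" if "R = Some u" for u using x that lt_asym by auto
    ultimately show "x \<in> Iset d L R" unfolding Iset_def using SV x by auto
  qed
  have cDd: "card Dd \<le> 2" using card_mono[OF Iset_fin DdI] iv unfolding inv_def by linarith
  have slp: "Slp (Suc d) (map_option (extf d) X) \<subseteq> Slp d X" if "slok d X" for X
  proof (cases X)
    case (Some u)
    then have "slok d (Some u)" using that by simp
    then have "\<forall>y\<in>S. anc y (extf d u) \<longrightarrow> anc y u" using ext_u by blast
    then show ?thesis unfolding Slp_def using Some by auto
  qed (simp add: Slp_def)
  have xpp: "Xpp q \<subseteq> Bdy d L R \<union> Dd" if q: "q \<in> Iset (Suc d) L R" for q
  proof
    fix y assume y: "y \<in> Xpp q"
    then obtain z where yz: "y \<in> S" "anc y q" "y \<noteq> q" "z \<in> S" "anc q z" "E z y" unfolding Xpp_def by blast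
    have qV: "q \<in> V" "dp q = Suc d" using q unfolding Iset_def by auto
    then have qr: "q \<noteq> r" using dp_r by auto
    have pq: "par q \<in> V" "dp (par q) = d" using parV dp_par qV qr by auto
    have apq: "anc (par q) q" using anc_par qV qr by blast
    have pI: "par q \<in> Iset d L R"
    proof -
      have "\<not> lt (par q) u" if "L = Some u" for u
        using q that lt_her[OF _ apq] anc_refl lt_V unfolding Iset_def by blast
      moreover have "\<not> lt u (par q)" if "R = Some u" for u
        using q that lt_her[OF _ _ apq] anc_refl lt_V unfolding Iset_def by blast
      ultimately show ?thesis unfolding Iset_def using pq by auto
    qed
    have "y = q \<or> anc y (par q)" using anc_par_iff[OF qV(1) qr] yz(2) by blast
    then have ay: "anc y (par q)" using yz(3) by blast
    show "y \<in> Bdy d L R \<union> Dd"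
    proof (cases "y = par q")
      case False
      then have "y \<in> Xpp (par q)" unfolding Xpp_def using yz ay anc_trans[OF apq yz(5)] by blast
      then show ?thesis unfolding Bdy_def using pI by blast
    next
      case True
      have yV: "y \<in> V" "dp y = d" using True pq by auto
      show ?thesis
      proof (cases "lok L y \<and> rok R y")
        case True then show ?thesis unfolding Dd_def Cont_def using yz(1) yV by auto
      next
        case False
        then consider "\<not> lok L y" | "\<not> rok R y" by blast
        then show ?thesis
        proof cases
          case 1
          then obtain u where u: "L = Some u" "\<not> lt u y" by (cases L) auto
          have fu: "free u" using sl(1) u unfolding slok_def by blast
          have uV: "u \<in> V" using fu unfolding free_def by blast
          have nyu: "\<not> lt y u" using pI True u unfolding Iset_def by auto
          show ?thesis using lt_tri[OF yV(1) uV] proof (elim disjE)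
            assume "anc y u" then show ?thesis unfolding Bdy_def Slp_def using u yz(1) yV by auto
          next
            assume "anc u y" then show ?thesis using fu yz(1) unfolding free_def by blast
          qed (use u nyu in blast)+
        next
          case 2
          then obtain u where u: "R = Some u" "\<not> lt y u" by (cases R) auto
          have fu: "free u" using sl(2) u unfolding slok_def by blast
          have uV: "u \<in> V" using fu unfolding free_def by blast
          have nyu: "\<not> lt u y" using pI True u unfolding Iset_def by auto
          show ?thesis using lt_tri[OF yV(1) uV] proof (elim disjE)
            assume "anc y u" then show ?thesis unfolding Bdy_def Slp_def using u yz(1) yV by auto
          next
            assume "anc u y" then show ?thesis using fu yz(1) unfolding free_def by blast
          qed (use u nyu in blast)+
        qed
      qed
    qed
  qed
  have bsub: "Bdy (Suc d) ?L ?R \<subseteq> Bdy d L R \<union> Dd"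
    using slp[OF sl(1)] slp[OF sl(2)] xpp Ieq unfolding Bdy_def by blast
  have cov: "Cont d L R = Dd \<union> Cont (Suc d) ?L ?R \<union> {}"
  proof -
    have "\<forall>x\<in>Cont d L R. d \<le> dp x" by (simp add: Cont_def)
    then show ?thesis unfolding Ceq Dd_def by auto
  qed
  have d1: "Dd \<inter> Cont (Suc d) ?L ?R = {}" using Ceq unfolding Dd_def by auto
  have bnd1: "\<forall>x\<in>Cont (Suc d) ?L ?R. \<forall>y\<in>Cont d L R \<union> Bdy d L R. E x y \<and> y \<notin> Cont (Suc d) ?L ?R \<longrightarrow> y \<in> Bdy (Suc d) ?L ?R"
  proof (intro ballI impI)
    fix x y assume x: "x \<in> Cont (Suc d) ?L ?R" and y: "y \<in> Cont d L R \<union> Bdy d L R"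
      and e: "E x y \<and> y \<notin> Cont (Suc d) ?L ?R"
    have "y \<in> S" using y Cont_S Bdy_S by blast
    then show "y \<in> Bdy (Suc d) ?L ?R" using boundary[OF sl' x] e by blast
  qed
  have bnd2: "\<forall>x\<in>{}. \<forall>y\<in>Cont d L R \<union> Bdy d L R. E x y \<and> y \<notin> {} \<longrightarrow> y \<in> {}" by simp
  have r2: "rtd E ({} \<union> {}) {[]} (\<lambda>_. {})" using rtd_single[of E "{}"] by simp
  have cB: "card (Bdy d L R) \<le> 2 * (H + 1) + 2 * t" using Bdy_card iv by blast
  have "card (Bdy d L R) + card Dd \<le> (2 * (H + 1) + 2 * t) + 2" using cDd cB by (rule add_mono[OF _ _] | simp)+
  then have "card (Bdy d L R \<union> Dd) \<le> (2 * (H + 1) + 2 * t) + 2" using card_Un_le[of "Bdy d L R" Dd] by (rule le_trans[rotated])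
  then have cb: "card (Bdy d L R \<union> Dd) \<le> KK" using H1 by simp
  have "CR d L R" if cr: "CR (Suc d) ?L ?R"
  proof -
    obtain N1 B1 where R1: "rtd E (Cont (Suc d) ?L ?R \<union> Bdy (Suc d) ?L ?R) N1 B1"
      "Bdy (Suc d) ?L ?R \<subseteq> B1 []" "\<forall>i\<in>N1. card (B1 i) \<le> KK" using cr unfolding CR_def by blast
    have e1: "Dd \<inter> {} = {}" "Cont (Suc d) ?L ?R \<inter> {} = {}" "{} \<subseteq> Bdy d L R \<union> Dd"
      "{} \<subseteq> (\<lambda>_::nat list. {}::'a set) []" "\<forall>i\<in>{[]::nat list}. card ((\<lambda>_. {}::'a set) i) \<le> KK" by simp_all
    have "\<exists>N B. rtd E (Cont d L R \<union> Bdy d L R) N B \<and> Bdy d L R \<subseteq> B [] \<and> (\<forall>i\<in>N. card (B i) \<le> KK)"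
      by (rule tglue[OF cov d1 e1(1) e1(2) Cont_Bdy bsub e1(3) bnd1 bnd2 Esy R1 r2 e1(4) e1(5) cb])
    then show ?thesis unfolding CR_def .
  qed
  then show ?thesis using inv' by blast
qed

end

context LWS begin

lemma leaf: "inv d L R \<Longrightarrow> Cont d L R = {} \<Longrightarrow> CR d L R"
proof -
  assume iv: "inv d L R" and e: "Cont d L R = {}"
  have "card (Bdy d L R) \<le> 2 * (H + 1) + 2 * t" using Bdy_card iv by blast
  then have c: "card (Bdy d L R) \<le> KK" by simp
  show ?thesis unfolding CR_def
    using rtd_single[of E "Bdy d L R"] e c by (intro exI[of _ "{[]}"] exI[of _ "\<lambda>_. Bdy d L R"]) auto
qed

lemma main_ind:
  assumes M: "\<forall>x\<in>S. dp x < M"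
  shows "inv d L R \<Longrightarrow> CR d L R"
proof (induction "M - d" arbitrary: d L R rule: less_induct)
  case (less d L R)
  note outer = less.hyps
  have "CR d L' R'" if "inv d L' R'" for L' R'
    using that
  proof (induction "card (Iset (Suc d) L' R')" arbitrary: L' R' rule: less_induct)
    case (less L R)
    show ?case
    proof (cases "Cont d L R = {}")
      case True then show ?thesis using leaf less.prems by blast
    next
      case False
      then obtain x where x: "x \<in> S" "d \<le> dp x" unfolding Cont_def by auto
      then have dM: "d < M" using M by force
      show ?thesis
      proof (cases "3 \<le> card (Iset (Suc d) L R)")
        case True
        obtain v where v: "inv d L (Some v)" "inv d (Some v) R"
          "card (Iset (Suc d) L (Some v)) < card (Iset (Suc d) L R)"
          "card (Iset (Suc d) (Some v) R) < card (Iset (Suc d) L R)"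
          "free v" "d < dp v" "dp v \<le> d + H"
          "\<forall>u. L = Some u \<longrightarrow> lt u v" "\<forall>u. R = Some u \<longrightarrow> lt v u"
          using narrow[OF less.prems True] by blast
        have c1: "CR d L (Some v)" using less.hyps v(3) v(1) by blast
        have c2: "CR d (Some v) R" using less.hyps v(4) v(2) by blast
        show ?thesis using narrow_step[OF less.prems v(5,6,7,8,9,1,2) c1 c2] .
      next
        case False
        then have "card (Iset (Suc d) L R) \<le> 2" by simp
        note ds = down_step[OF less.prems this]
        have "M - Suc d < M - d" using dM by simp
        then have "CR (Suc d) (map_option (extf d) L) (map_option (extf d) R)"
          using outer ds by blast
        then show ?thesis using ds by blast
      qed
    qed
  qed
  then show ?case using less.prems by blast
qed

lemma final: "\<exists>N B. rtd E S N B \<and> (\<forall>i\<in>N. card (B i) \<le> KK)"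
proof -
  define M where "M = Suc (Max (insert 0 (dp ` S)))"
  have M: "\<forall>x\<in>S. dp x < M" unfolding M_def using finS by (simp add: le_imp_less_Suc)
  have I0: "Iset 0 None None = {r}"
    unfolding Iset_def using dp0 dp_r rV by auto
  have iv: "inv 0 None None" unfolding inv_def slok_def I0 by simp
  have C0: "Cont 0 None None = S" unfolding Cont_def by auto
  have X0: "Xpp r = {}"
  proof (rule equals0I)
    fix y assume "y \<in> Xpp r"
    then have "dp y < dp r" by (rule Xpp_dp)
    then show False using dp_r by simp
  qed
  have B0: "Bdy 0 None None = {}" unfolding Bdy_def Slp_def I0 by (simp add: X0)
  show ?thesis using main_ind[OF M iv] unfolding CR_def C0 B0 by auto
qed

end

theorem theorem1p13:
  fixes V :: "'a set" and r :: 'a and par :: "'a \<Rightarrow> 'a"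
    and slt :: "'a \<Rightarrow> 'a \<Rightarrow> bool" and E :: "'a \<Rightarrow> 'a \<Rightarrow> bool"
  assumes "layered_wheel V r par slt E"
    and "neat V r par"
    and "upward_restricted V r par E"
  shows "\<exists>c::real. \<forall>S. S \<subseteq> V \<and> finite S \<and> card S \<ge> 2 \<longrightarrow>
           treewidth_at_most S E (c * ln (real (card S)))"
proof -
  interpret LW V r par slt E using assms(1,2) by unfold_locales
  obtain t where ht: "\<forall>v\<in>V. \<exists>X. finite X \<and> card X \<le> t \<and> (\<forall>x\<in>X. anc x v)
      \<and> (\<forall>x y. E x y \<and> dp x \<noteq> dp y \<and> anc v x \<and> \<not> anc v y \<longrightarrow> y \<in> X)"
    using assms(3) unfolding upward_restricted_def by blast
  define Xu where "Xu v = (SOME X. finite X \<and> card X \<le> t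
      \<and> (\<forall>x y. E x y \<and> dp x \<noteq> dp y \<and> anc v x \<and> \<not> anc v y \<longrightarrow> y \<in> X))" for v
  have Xu: "finite (Xu v) \<and> card (Xu v) \<le> t \<and>
        (\<forall>x y. E x y \<and> dp x \<noteq> dp y \<and> anc v x \<and> \<not> anc v y \<longrightarrow> y \<in> Xu v)" if "v \<in> V" for v
  proof -
    have "\<exists>X. finite X \<and> card X \<le> t
      \<and> (\<forall>x y. E x y \<and> dp x \<noteq> dp y \<and> anc v x \<and> \<not> anc v y \<longrightarrow> y \<in> X)" using ht that by blast
    then show ?thesis unfolding Xu_def by (rule someI_ex)
  qed
  define c where "c = (6 * (real Bd + 2) + 5 + 2 * real t) / ln 2"
  show ?thesis
  proof (intro exI[of _ c] allI impI)
    fix S assume S: "S \<subseteq> V \<and> finite S \<and> 2 \<le> card S"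
    define n where "n = card S"
    have n2: "2 \<le> n" using S n_def by simp
    have ex: "n < 2 ^ n" by (rule less_exp)
    define m where "m = (LEAST m. n < 2 ^ m)"
    have m: "n < 2 ^ m" unfolding m_def using LeastI[of "\<lambda>m. n < 2 ^ m", OF ex] .
    have m0: "m \<noteq> 0" using m n2 by (intro notI) simp
    have m1: "2 ^ (m - 1) \<le> n"
    proof -
      have "m - 1 < m" using m0 by simp
      then have "\<not> n < 2 ^ (m - 1)" unfolding m_def by (rule not_less_Least)
      then show ?thesis by simp
    qed
    define H where "H = m * (Bd + 2) + 1"
    interpret LWS V r par slt E S t Xu H
    proof unfold_locales
      show "S \<subseteq> V" "finite S" using S by auto
      show "\<And>v. v \<in> V \<Longrightarrow> finite (Xu v) \<and> card (Xu v) \<le> t \<and>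
        (\<forall>x y. E x y \<and> dp x \<noteq> dp y \<and> anc v x \<and> \<not> anc v y \<longrightarrow> y \<in> Xu v)" using Xu by blast
      show "1 \<le> H" unfolding H_def by simp
      fix j assume j: "j \<in> V"
      have "card S < 2 ^ m" using m n_def by simp
      then obtain v where v: "anc j v" "dp v \<le> dp j + m * (Bd + 2)" "\<forall>z\<in>S. \<not> anc v z"
        using freenode[OF j] S by blast
      moreover have "H - 1 = m * (Bd + 2)" unfolding H_def by simp
      ultimately show "\<exists>v. anc j v \<and> dp v \<le> dp j + (H - 1) \<and> v \<in> V \<and> (\<forall>z\<in>S. \<not> anc v z)"
        using ancV by metis
    qed
    obtain N B where NB: "rtd E S N B" "\<forall>i\<in>N. card (B i) \<le> 3 * (H + 1) + 2 * t"
      using final by blast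
    have l2: "0 < ln (2::real)" by simp
    have lnn: "ln 2 \<le> ln (real n)" using n2 by simp
    have "ln (real (2 ^ (m - 1) :: nat)) \<le> ln (real n)"
      using m1 n2 by (subst ln_le_cancel_iff) auto
    then have "real (m - 1) * ln 2 \<le> ln (real n)" by (simp add: ln_realpow)
    then have am: "real (m - 1) \<le> ln (real n) / ln 2" using l2 by (simp add: pos_le_divide_eq)
    define A where "A = ln (real n) / ln 2"
    have A1: "1 \<le> A" unfolding A_def using lnn l2 by simp
    have "real (m - 1) = real m - 1" using m0 by (simp add: of_nat_diff)
    then have "real m \<le> 1 + A" using am unfolding A_def by linarith
    then have mA: "real m \<le> 2 * A" using A1 by linarith
    have key: "3 * real m * (real Bd + 2) + 5 + 2 * real t \<le> c * ln (real n)"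
    proof -
      have "c * ln (real n) = (6 * (real Bd + 2) + 5 + 2 * real t) * A"
        unfolding c_def A_def by simp
      moreover have "3 * real m * (real Bd + 2) \<le> 3 * (2 * A) * (real Bd + 2)"
        using mA by (intro mult_right_mono mult_left_mono) auto
      moreover have "3 * (2 * A) * (real Bd + 2) = 6 * (real Bd + 2) * A" by simp
      moreover have "5 + 2 * real t \<le> (5 + 2 * real t) * A"
        using A1 by (simp add: mult_le_cancel_left1)
      ultimately show ?thesis by (simp add: algebra_simps)
    qed
    have "\<forall>i\<in>N. real (card (B i)) - 1 \<le> c * ln (real n)"
    proof
      fix i assume "i \<in> N"
      then have "card (B i) \<le> 3 * (H + 1) + 2 * t" using NB(2) by blast
      then have "real (card (B i)) \<le> real (3 * (H + 1) + 2 * t)" by linarith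
      also have "\<dots> = 3 * real m * (real Bd + 2) + 6 + 2 * real t" unfolding H_def by (simp add: algebra_simps)
      finally show "real (card (B i)) - 1 \<le> c * ln (real n)" using key by linarith
    qed
    then show "treewidth_at_most S E (c * ln (real (card S)))"
      using rtd_tw[OF NB(1)] n_def by simp
  qed
qed

end
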